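(* Let $\mathcal{F}=(f_s:I_s\to[n]\mid s\in S)$ be an $S$-claw in $\Delta_+$ ($S$ a finite set, $n\ge -1$). (a) $\mathcal{F}$ is a candidate $S$-covering in $\Delta_+$ if and only if $\mathcal{F}$ is backwards compatible; in this case its Čech cube $\check{C}\mathcal{F}:\mathcal{P}(S)^{\mathrm{op}}\to\Delta_+$ is given by $$T\longmapsto \mathop{\star}_{i\in[n]}\ \prod_{t\in T}f_t^{-1}\{i\},$$ where each $f_t^{-1}\{i\}$ carries the order induced from $I_t$, the product is the product poset (a singleton when $T=\emptyset$), $\star$ is ordered concatenation in increasing $i$, and the maps are induced by the projections. (b) The Čech cube $\check{C}\mathcal{F}$ is strongly biCartesian in $\Delta_+$ if and only if $\mathcal{F}$ is compatible.
   Context: $\Delta_+$ is the category of finite (possibly empty) linearly ordered sets and weakly monotone maps; $[n]=\{0<\dots<n\}$, $[-1]=\emptyset$. For a finite set $S$, $\mathcal{P}(S)$ is the poset of subsets. An $S$-claw on $[n]$ is a family of morphisms $f_s:I_s\to[n]$, $s\in S$. It is a candidate $S$-covering if it extends to a strongly Cartesian $S$-cube $Q:\mathcal{P}(S)^{\mathrm{op}}\to\Delta_+$ with $Q(\emptyset)=[n]$ and $Q(\{s\})\to Q(\emptyset)$ equal to $f_s$; strongly Cartesian (resp. strongly coCartesian, strongly biCartesian) means every square $Q(T\cup\{s,s'\})\to Q(T\cup\{s\}),Q(T\cup\{s'\})\to Q(T)$ ($s\neq s'\notin T$) is a pullback (resp. pushout, both). This extension (unique up to isomorphism) is the Čech cube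 $\check{C}\mathcal{F}$. The claw is backwards compatible if for each $i\in[n]$ there is at most one $s$ with $|f_s^{-1}\{i\}|>1$. It is compatible if (BC1) for each $i\in[n]$ there is at most one $s$ such that $f_s^{-1}\{i\}$ is not a singleton, and (BC2) for each $0<i\le n$ there is at most one $s$ such that $\{i-1,i\}\not\subseteq f_s(I_s)$. *)

theory Defs
  imports Main "HOL-Library.FuncSet"
begin

text \<open>Skeletal model of Delta_+: the object of size m is the ordinal {0..<m};
  so [n] has size n+1 and [-1] = empty has size 0.  A morphism m -> k is a function
  on nat, weakly monotone on {..<m} with values in {..<k}; two morphisms with domain m
  are equal iff they agree on {..<m}.\<close>

definition dmor :: "nat \<Rightarrow> nat \<Rightarrow> (nat \<Rightarrow> nat) \<Rightarrow> bool" where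
  "dmor m k g \<longleftrightarrow> (\<forall>i<m. g i < k) \<and> (\<forall>i j. i \<le> j \<longrightarrow> j < m \<longrightarrow> g i \<le> g j)"

definition meq :: "nat \<Rightarrow> (nat \<Rightarrow> nat) \<Rightarrow> (nat \<Rightarrow> nat) \<Rightarrow> bool" where
  "meq m g h \<longleftrightarrow> (\<forall>i<m. g i = h i)"

definition is_square :: "nat \<Rightarrow> nat \<Rightarrow> nat \<Rightarrow> nat \<Rightarrow> (nat \<Rightarrow> nat) \<Rightarrow> (nat \<Rightarrow> nat)
    \<Rightarrow> (nat \<Rightarrow> nat) \<Rightarrow> (nat \<Rightarrow> nat) \<Rightarrow> bool" where
  "is_square a b c d p q u v \<longleftrightarrow> dmor a b p \<and> dmor a c q \<and> dmor b d u \<and> dmor c d v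
     \<and> meq a (u \<circ> p) (v \<circ> q)"

definition is_pullback :: "nat \<Rightarrow> nat \<Rightarrow> nat \<Rightarrow> nat \<Rightarrow> (nat \<Rightarrow> nat) \<Rightarrow> (nat \<Rightarrow> nat)
    \<Rightarrow> (nat \<Rightarrow> nat) \<Rightarrow> (nat \<Rightarrow> nat) \<Rightarrow> bool" where
  "is_pullback a b c d p q u v \<longleftrightarrow> is_square a b c d p q u v \<and>
     (\<forall>x g h. dmor x b g \<and> dmor x c h \<and> meq x (u \<circ> g) (v \<circ> h) \<longrightarrow>
        (\<exists>w. dmor x a w \<and> meq x (p \<circ> w) g \<and> meq x (q \<circ> w) h \<and>
           (\<forall>w'. dmor x a w' \<and> meq x (p \<circ> w') g \<and> meq x (q \<circ> w') h \<longrightarrow> meq x w' w)))"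

definition is_pushout :: "nat \<Rightarrow> nat \<Rightarrow> nat \<Rightarrow> nat \<Rightarrow> (nat \<Rightarrow> nat) \<Rightarrow> (nat \<Rightarrow> nat)
    \<Rightarrow> (nat \<Rightarrow> nat) \<Rightarrow> (nat \<Rightarrow> nat) \<Rightarrow> bool" where
  "is_pushout a b c d p q u v \<longleftrightarrow> is_square a b c d p q u v \<and>
     (\<forall>x g h. dmor b x g \<and> dmor c x h \<and> meq a (g \<circ> p) (h \<circ> q) \<longrightarrow>
        (\<exists>w. dmor d x w \<and> meq b (w \<circ> u) g \<and> meq c (w \<circ> v) h \<and>
           (\<forall>w'. dmor d x w' \<and> meq b (w' \<circ> u) g \<and> meq c (w' \<circ> v) h \<longrightarrow> meq d w' w)))"

definition is_cube :: "'a set \<Rightarrow> ('a set \<Rightarrow> nat) \<Rightarrow> ('a set \<Rightarrow> 'a set \<Rightarrow> nat \<Rightarrow> nat) \<Rightarrow> bool" where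
  "is_cube S Q M \<longleftrightarrow>
     (\<forall>T T'. T \<subseteq> T' \<longrightarrow> T' \<subseteq> S \<longrightarrow> dmor (Q T') (Q T) (M T T')) \<and>
     (\<forall>T. T \<subseteq> S \<longrightarrow> meq (Q T) (M T T) id) \<and>
     (\<forall>T T' T''. T \<subseteq> T' \<longrightarrow> T' \<subseteq> T'' \<longrightarrow> T'' \<subseteq> S \<longrightarrow>
        meq (Q T'') (M T T' \<circ> M T' T'') (M T T''))"

definition strongly_cartesian :: "'a set \<Rightarrow> ('a set \<Rightarrow> nat) \<Rightarrow> ('a set \<Rightarrow> 'a set \<Rightarrow> nat \<Rightarrow> nat) \<Rightarrow> bool" where
  "strongly_cartesian S Q M \<longleftrightarrow>
     (\<forall>T s s'. T \<subseteq> S \<longrightarrow> s \<in> S \<longrightarrow> s' \<in> S \<longrightarrow> s \<noteq> s' \<longrightarrow> s \<notin> T \<longrightarrow> s' \<notin> T \<longrightarrow>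
        is_pullback (Q (T \<union> {s, s'})) (Q (T \<union> {s})) (Q (T \<union> {s'})) (Q T)
          (M (T \<union> {s}) (T \<union> {s, s'})) (M (T \<union> {s'}) (T \<union> {s, s'}))
          (M T (T \<union> {s})) (M T (T \<union> {s'})))"

definition strongly_cocartesian :: "'a set \<Rightarrow> ('a set \<Rightarrow> nat) \<Rightarrow> ('a set \<Rightarrow> 'a set \<Rightarrow> nat \<Rightarrow> nat) \<Rightarrow> bool" where
  "strongly_cocartesian S Q M \<longleftrightarrow>
     (\<forall>T s s'. T \<subseteq> S \<longrightarrow> s \<in> S \<longrightarrow> s' \<in> S \<longrightarrow> s \<noteq> s' \<longrightarrow> s \<notin> T \<longrightarrow> s' \<notin> T \<longrightarrow>
        is_pushout (Q (T \<union> {s, s'})) (Q (T \<union> {s})) (Q (T \<union> {s'})) (Q T)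
          (M (T \<union> {s}) (T \<union> {s, s'})) (M (T \<union> {s'}) (T \<union> {s, s'}))
          (M T (T \<union> {s})) (M T (T \<union> {s'})))"

definition strongly_bicartesian :: "'a set \<Rightarrow> ('a set \<Rightarrow> nat) \<Rightarrow> ('a set \<Rightarrow> 'a set \<Rightarrow> nat \<Rightarrow> nat) \<Rightarrow> bool" where
  "strongly_bicartesian S Q M \<longleftrightarrow> strongly_cartesian S Q M \<and> strongly_cocartesian S Q M"

text \<open>An S-claw on [n]: N = n+1 is the size of [n]; f s : I s -> N for s in S.
  (Q,M) is a Cech cube of the claw: a strongly Cartesian S-cube with Q {} = [n],
  Q {s} = I_s and Q {s} -> Q {} equal to f s.\<close>

definition is_cech_cube :: "'a set \<Rightarrow> ('a \<Rightarrow> nat) \<Rightarrow> nat \<Rightarrow> ('a \<Rightarrow> nat \<Rightarrow> nat)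
    \<Rightarrow> ('a set \<Rightarrow> nat) \<Rightarrow> ('a set \<Rightarrow> 'a set \<Rightarrow> nat \<Rightarrow> nat) \<Rightarrow> bool" where
  "is_cech_cube S I N f Q M \<longleftrightarrow> is_cube S Q M \<and> strongly_cartesian S Q M \<and> Q {} = N \<and>
     (\<forall>s\<in>S. Q {s} = I s \<and> meq (I s) (M {} {s}) (f s))"

definition candidate_covering :: "'a set \<Rightarrow> ('a \<Rightarrow> nat) \<Rightarrow> nat \<Rightarrow> ('a \<Rightarrow> nat \<Rightarrow> nat) \<Rightarrow> bool" where
  "candidate_covering S I N f \<longleftrightarrow> (\<exists>Q M. is_cech_cube S I N f Q M)"

definition fiber :: "('a \<Rightarrow> nat) \<Rightarrow> ('a \<Rightarrow> nat \<Rightarrow> nat) \<Rightarrow> 'a \<Rightarrow> nat \<Rightarrow> nat set" where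
  "fiber I f s i = {j. j < I s \<and> f s j = i}"

definition backwards_compatible :: "'a set \<Rightarrow> ('a \<Rightarrow> nat) \<Rightarrow> nat \<Rightarrow> ('a \<Rightarrow> nat \<Rightarrow> nat) \<Rightarrow> bool" where
  "backwards_compatible S I N f \<longleftrightarrow>
     (\<forall>i<N. \<forall>s\<in>S. \<forall>s'\<in>S. card (fiber I f s i) > 1 \<longrightarrow> card (fiber I f s' i) > 1 \<longrightarrow> s = s')"

definition compatible :: "'a set \<Rightarrow> ('a \<Rightarrow> nat) \<Rightarrow> nat \<Rightarrow> ('a \<Rightarrow> nat \<Rightarrow> nat) \<Rightarrow> bool" where
  "compatible S I N f \<longleftrightarrow>
     (\<forall>i<N. \<forall>s\<in>S. \<forall>s'\<in>S. card (fiber I f s i) \<noteq> 1 \<longrightarrow> card (fiber I f s' i) \<noteq> 1 \<longrightarrow> s = s') \<and>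
     (\<forall>i. 0 < i \<longrightarrow> i < N \<longrightarrow> (\<forall>s\<in>S. \<forall>s'\<in>S.
        \<not> {i - 1, i} \<subseteq> f s ` {..<I s} \<longrightarrow> \<not> {i - 1, i} \<subseteq> f s' ` {..<I s'} \<longrightarrow> s = s'))"

text \<open>The explicit cube  T |-> concatenation over i<N of  prod_{t in T} f_t^{-1}{i}:
  elements (i, x) with x \<in> Pi_E T (fiber at i), ordered first by i, then by the
  product order; maps are induced by projections (restriction of x).\<close>

definition cech_obj :: "('a \<Rightarrow> nat) \<Rightarrow> nat \<Rightarrow> ('a \<Rightarrow> nat \<Rightarrow> nat) \<Rightarrow> 'a set \<Rightarrow> (nat \<times> ('a \<Rightarrow> nat)) set" where
  "cech_obj I N f T = {(i, x). i < N \<and> x \<in> (\<Pi>\<^sub>E t\<in>T. fiber I f t i)}"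

definition cech_le :: "'a set \<Rightarrow> nat \<times> ('a \<Rightarrow> nat) \<Rightarrow> nat \<times> ('a \<Rightarrow> nat) \<Rightarrow> bool" where
  "cech_le T p q \<longleftrightarrow> fst p < fst q \<or> (fst p = fst q \<and> (\<forall>t\<in>T. snd p t \<le> snd q t))"

definition cech_formula :: "'a set \<Rightarrow> ('a \<Rightarrow> nat) \<Rightarrow> nat \<Rightarrow> ('a \<Rightarrow> nat \<Rightarrow> nat)
    \<Rightarrow> ('a set \<Rightarrow> nat) \<Rightarrow> ('a set \<Rightarrow> 'a set \<Rightarrow> nat \<Rightarrow> nat) \<Rightarrow> bool" where
  "cech_formula S I N f Q M \<longleftrightarrow>
     (\<exists>\<phi> :: 'a set \<Rightarrow> nat \<Rightarrow> nat \<times> ('a \<Rightarrow> nat).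
        (\<forall>T. T \<subseteq> S \<longrightarrow>
           bij_betw (\<phi> T) {..<Q T} (cech_obj I N f T) \<and>
           (\<forall>k<Q T. \<forall>k'<Q T. k \<le> k' \<longleftrightarrow> cech_le T (\<phi> T k) (\<phi> T k'))) \<and>
        (\<forall>T T'. T \<subseteq> T' \<longrightarrow> T' \<subseteq> S \<longrightarrow> (\<forall>k<Q T'.
           \<phi> T (M T T' k) = (fst (\<phi> T' k), restrict (snd (\<phi> T' k)) T))))"

end

theory Submission
  imports Defs
begin

lemma dmorD1: "dmor m k g \<Longrightarrow> i < m \<Longrightarrow> g i < k" by (simp add: dmor_def)
lemma dmorD2: "dmor m k g \<Longrightarrow> i \<le> j \<Longrightarrow> j < m \<Longrightarrow> g i \<le> g j" by (simp add: dmor_def)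
lemma dmor_rev: "dmor m k g \<Longrightarrow> i < m \<Longrightarrow> j < m \<Longrightarrow> g i < g j \<Longrightarrow> i < j"
  by (metis dmorD2 leD le_less_linear)
lemma dmor_const: "c < k \<Longrightarrow> dmor m k (\<lambda>_. c)" by (simp add: dmor_def)

lemma pb_univ:
  assumes "is_pullback a b c d p q u v" "dmor x b g" "dmor x c h" "meq x (u \<circ> g) (v \<circ> h)"
  obtains w where "dmor x a w" "meq x (p \<circ> w) g" "meq x (q \<circ> w) h"
    "\<And>w'. dmor x a w' \<Longrightarrow> meq x (p \<circ> w') g \<Longrightarrow> meq x (q \<circ> w') h \<Longrightarrow> meq x w' w"
  using assms unfolding is_pullback_def by blast

lemma pb_ex:
  assumes "is_pullback a b c d p q u v" "y < b" "z < c" "u y = v z"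
  shows "\<exists>w<a. p w = y \<and> q w = z"
proof -
  have "dmor 1 b (\<lambda>_. y)" "dmor 1 c (\<lambda>_. z)" "meq 1 (u \<circ> (\<lambda>_. y)) (v \<circ> (\<lambda>_. z))"
    using assms by (auto simp: dmor_def meq_def)
  then obtain w where "dmor 1 a w" "meq 1 (p \<circ> w) (\<lambda>_. y)" "meq 1 (q \<circ> w) (\<lambda>_. z)"
    using pb_univ[OF assms(1)] by metis
  then show ?thesis by (intro exI[of _ "w 0"]) (auto simp: dmor_def meq_def)
qed

lemma pb_inj:
  assumes "is_pullback a b c d p q u v" "w1 < a" "w2 < a" "p w1 = p w2" "q w1 = q w2"
  shows "w1 = w2"
proof -
  have sq: "dmor a b p" "dmor a c q" "meq a (u \<circ> p) (v \<circ> q)"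
    using assms(1) by (auto simp: is_pullback_def is_square_def)
  have "dmor 1 b (\<lambda>_. p w1)" "dmor 1 c (\<lambda>_. q w1)" "meq 1 (u \<circ> (\<lambda>_. p w1)) (v \<circ> (\<lambda>_. q w1))"
    using sq assms(2) by (auto simp: dmor_def meq_def)
  then obtain w where
    U: "\<And>w'. dmor 1 a w' \<Longrightarrow> meq 1 (p \<circ> w') (\<lambda>_. p w1) \<Longrightarrow> meq 1 (q \<circ> w') (\<lambda>_. q w1) \<Longrightarrow> meq 1 w' w"
    using pb_univ[OF assms(1)] by metis
  have "meq 1 (\<lambda>_. w1) w" by (rule U) (use assms in \<open>auto simp: dmor_def meq_def\<close>)
  moreover have "meq 1 (\<lambda>_. w2) w" by (rule U) (use assms in \<open>auto simp: dmor_def meq_def\<close>)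
  ultimately show ?thesis by (auto simp: meq_def)
qed

lemma pullback_intro:
  assumes sq: "is_square a b c d p q u v"
    and ex: "\<And>y z. y < b \<Longrightarrow> z < c \<Longrightarrow> u y = v z \<Longrightarrow> \<exists>w<a. p w = y \<and> q w = z"
    and rf: "\<And>w w'. w < a \<Longrightarrow> w' < a \<Longrightarrow> p w \<le> p w' \<Longrightarrow> q w \<le> q w' \<Longrightarrow> w \<le> w'"
  shows "is_pullback a b c d p q u v"
  unfolding is_pullback_def
proof (intro conjI sq allI impI)
  fix x g h assume H: "dmor x b g \<and> dmor x c h \<and> meq x (u \<circ> g) (v \<circ> h)"
  define w where "w j = (SOME \<alpha>. \<alpha> < a \<and> p \<alpha> = g j \<and> q \<alpha> = h j)" for j
  have W: "w j < a \<and> p (w j) = g j \<and> q (w j) = h j" if "j < x" for j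
  proof -
    have "\<exists>\<alpha><a. p \<alpha> = g j \<and> q \<alpha> = h j"
      using ex[of "g j" "h j"] H that by (auto simp: dmor_def meq_def)
    then show ?thesis unfolding w_def by (rule someI_ex[where P="\<lambda>\<alpha>. \<alpha> < a \<and> p \<alpha> = g j \<and> q \<alpha> = h j", simplified])
  qed
  have sq': "dmor a b p" "dmor a c q" using sq by (auto simp: is_square_def)
  show "\<exists>w. dmor x a w \<and> meq x (p \<circ> w) g \<and> meq x (q \<circ> w) h \<and>
           (\<forall>w'. dmor x a w' \<and> meq x (p \<circ> w') g \<and> meq x (q \<circ> w') h \<longrightarrow> meq x w' w)"
  proof (intro exI conjI allI impI)
    show "dmor x a w" unfolding dmor_def
    proof (intro conjI allI impI)
      fix i assume "i < x" then show "w i < a" using W by blast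
    next
      fix i j assume "i \<le> j" "j < x"
      then have "i < x" by simp
      have "g i \<le> g j" "h i \<le> h j" using H \<open>i \<le> j\<close> \<open>j < x\<close> dmorD2 by blast+
      then show "w i \<le> w j" using W[OF \<open>i < x\<close>] W[OF \<open>j < x\<close>] rf by simp
    qed
    show "meq x (p \<circ> w) g" "meq x (q \<circ> w) h" using W by (auto simp: meq_def)
    fix w' assume "dmor x a w' \<and> meq x (p \<circ> w') g \<and> meq x (q \<circ> w') h"
    then have H': "dmor x a w'" "meq x (p \<circ> w') g" "meq x (q \<circ> w') h" by auto
    show "meq x w' w" unfolding meq_def
    proof (intro allI impI)
      fix i assume i: "i < x"
      have a1: "w' i < a" using H' i dmorD1 by blast
      have e: "p (w' i) = p (w i)" "q (w' i) = q (w i)" using H' W[OF i] i by (auto simp: meq_def)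
      show "w' i = w i" using rf[OF a1 conjunct1[OF W[OF i]]] rf[OF conjunct1[OF W[OF i]] a1] e by simp
    qed
  qed
qed


lemma fiber_finite: "finite (fiber I f s i)"
  unfolding fiber_def by simp

lemma fiber_ne: "fiber I f t m \<noteq> {} \<longleftrightarrow> m \<in> f t ` {..<I t}"
  unfolding fiber_def by auto

lemma two_elems:
  assumes "finite A" "1 < card A" shows "\<exists>x y. x \<in> A \<and> y \<in> A \<and> x < (y::nat)"
proof -
  from assms have "\<not> card A \<le> Suc 0" by simp
  then obtain x y where "x \<in> A" "y \<in> A" "x \<noteq> y" using card_le_Suc0_iff_eq[OF assms(1)] by blast
  then show ?thesis by (metis linorder_neqE_nat)
qed

lemma card_one_eq: "finite A \<Longrightarrow> card A \<le> 1 \<Longrightarrow> x \<in> A \<Longrightarrow> y \<in> A \<Longrightarrow> x = y"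
  using card_le_Suc0_iff_eq by fastforce

locale ccube =
  fixes S :: "'a set" and I :: "'a \<Rightarrow> nat" and N :: nat and f :: "'a \<Rightarrow> nat \<Rightarrow> nat"
    and Q :: "'a set \<Rightarrow> nat" and M :: "'a set \<Rightarrow> 'a set \<Rightarrow> nat \<Rightarrow> nat"
  assumes finS: "finite S" and cc: "is_cech_cube S I N f Q M"
begin

lemma cube: "is_cube S Q M" using cc by (simp add: is_cech_cube_def)
lemma Mdmor: "T \<subseteq> T' \<Longrightarrow> T' \<subseteq> S \<Longrightarrow> dmor (Q T') (Q T) (M T T')"
  using cube unfolding is_cube_def by blast
lemma Mlt: "T \<subseteq> T' \<Longrightarrow> T' \<subseteq> S \<Longrightarrow> k < Q T' \<Longrightarrow> M T T' k < Q T"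
  by (rule dmorD1[OF Mdmor])
lemma Mmono: "T \<subseteq> T' \<Longrightarrow> T' \<subseteq> S \<Longrightarrow> k \<le> k' \<Longrightarrow> k' < Q T' \<Longrightarrow> M T T' k \<le> M T T' k'"
  by (rule dmorD2[OF Mdmor])
lemma Mid: "T \<subseteq> S \<Longrightarrow> k < Q T \<Longrightarrow> M T T k = k"
proof -
  assume "T \<subseteq> S" "k < Q T"
  moreover have "\<forall>T. T \<subseteq> S \<longrightarrow> meq (Q T) (M T T) id" using cube unfolding is_cube_def by blast
  ultimately show ?thesis unfolding meq_def by simp
qed
lemma Mcomp: "T \<subseteq> T' \<Longrightarrow> T' \<subseteq> T'' \<Longrightarrow> T'' \<subseteq> S \<Longrightarrow> k < Q T'' \<Longrightarrow> M T T' (M T' T'' k) = M T T'' k"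
proof -
  assume a: "T \<subseteq> T'" "T' \<subseteq> T''" "T'' \<subseteq> S" "k < Q T''"
  have "\<forall>T T' T''. T \<subseteq> T' \<longrightarrow> T' \<subseteq> T'' \<longrightarrow> T'' \<subseteq> S \<longrightarrow>
        meq (Q T'') (M T T' \<circ> M T' T'') (M T T'')" using cube unfolding is_cube_def by blast
  then have "meq (Q T'') (M T T' \<circ> M T' T'') (M T T'')" using a by blast
  then show ?thesis using a(4) unfolding meq_def by simp
qed
lemma Q0: "Q {} = N"
  using cc by (simp add: is_cech_cube_def)
lemma Qs: "s \<in> S \<Longrightarrow> Q {s} = I s"
  using cc by (simp add: is_cech_cube_def)
lemma Ms: "s \<in> S \<Longrightarrow> k < I s \<Longrightarrow> M {} {s} k = f s k"
  using cc by (simp add: is_cech_cube_def meq_def)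
lemma pbsq: "T \<subseteq> S \<Longrightarrow> s \<in> S \<Longrightarrow> s' \<in> S \<Longrightarrow> s \<noteq> s' \<Longrightarrow> s \<notin> T \<Longrightarrow> s' \<notin> T \<Longrightarrow>
  is_pullback (Q (T \<union> {s, s'})) (Q (T \<union> {s})) (Q (T \<union> {s'})) (Q T)
          (M (T \<union> {s}) (T \<union> {s, s'})) (M (T \<union> {s'}) (T \<union> {s, s'}))
          (M T (T \<union> {s})) (M T (T \<union> {s'}))"
  using cc unfolding is_cech_cube_def strongly_cartesian_def by blast

lemma fib: "T \<subseteq> S \<Longrightarrow> t \<in> T \<Longrightarrow> k < Q T \<Longrightarrow> M {t} T k \<in> fiber I f t (M {} T k)"
proof -
  assume a: "T \<subseteq> S" "t \<in> T" "k < Q T"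
  have t: "t \<in> S" using a by auto
  have l: "M {t} T k < I t" using Mlt[of "{t}" T k] a Qs[OF t] by auto
  have "f t (M {t} T k) = M {} {t} (M {t} T k)" using Ms[OF t l] by simp
  also have "\<dots> = M {} T k" using Mcomp[of "{}" "{t}" T k] a by auto
  finally show ?thesis using l unfolding fiber_def by simp
qed

lemma Mfst: "T \<subseteq> S \<Longrightarrow> k < Q T \<Longrightarrow> M {} T k < N"
  using Mlt[of "{}" T k] Q0 by auto

lemma inj_surj:
  "T \<subseteq> S \<Longrightarrow> (\<forall>k<Q T. \<forall>k'<Q T. M {} T k = M {} T k' \<longrightarrow> (\<forall>t\<in>T. M {t} T k = M {t} T k') \<longrightarrow> k = k') \<and>
     (\<forall>i<N. \<forall>x. (\<forall>t\<in>T. x t \<in> fiber I f t i) \<longrightarrow> (\<exists>k<Q T. M {} T k = i \<and> (\<forall>t\<in>T. M {t} T k = x t)))"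
proof (induction "card T" arbitrary: T rule: less_induct)
  case less
  have TS: "T \<subseteq> S" by fact
  have finT: "finite T" using less.prems finS finite_subset by blast
  show ?case
  proof (cases "T = {}")
    case True
    show ?thesis
    proof (intro conjI allI impI)
      fix k k' assume "k < Q T" "k' < Q T" "M {} T k = M {} T k'"
      then show "k = k'" using Mid[of "{}"] True by simp
    next
      fix i x assume "i < N"
      then show "\<exists>k<Q T. M {} T k = i \<and> (\<forall>t\<in>T. M {t} T k = x t)"
        using Mid[of "{}" i] True Q0 by auto
    qed
  next
    case ne: False
    show ?thesis
    proof (cases "card T \<le> 1")
      case True
      obtain t where t: "t \<in> T" using ne by blast
      have Tt: "T = {t}" using card_one_eq[OF finT True] t by blast
      have tS: "t \<in> S" using TS t by auto
      show ?thesis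
      proof (intro conjI allI impI)
        fix k k' assume "k < Q T" "k' < Q T" "\<forall>t\<in>T. M {t} T k = M {t} T k'"
        then show "k = k'" using Mid[of "{t}" k] Mid[of "{t}" k'] Tt tS by auto
      next
        fix i x assume i: "i < N" and x: "\<forall>t\<in>T. x t \<in> fiber I f t i"
        then have x1: "x t < I t" "f t (x t) = i" using Tt unfolding fiber_def by auto
        show "\<exists>k<Q T. M {} T k = i \<and> (\<forall>t\<in>T. M {t} T k = x t)"
          using x1 Ms[OF tS x1(1)] Mid[of "{t}" "x t"] Qs[OF tS] Tt tS
          by (intro exI[of _ "x t"]) auto
      qed
    next
      case False
      then obtain s s' where ss: "s \<in> T" "s' \<in> T" "s \<noteq> s'"
        using card_le_Suc0_iff_eq[OF finT] by auto
      define T0 where "T0 = T - {s, s'}"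
      define B where "B = T0 \<union> {s}"
      define C where "C = T0 \<union> {s'}"
      have TT: "T0 \<union> {s, s'} = T" using ss unfolding T0_def by auto
      have sub: "T0 \<subseteq> S" "B \<subseteq> S" "C \<subseteq> S" "T0 \<subseteq> B" "T0 \<subseteq> C" "B \<subseteq> T" "C \<subseteq> T" "{} \<subseteq> B" "{} \<subseteq> C"
        using TS ss unfolding T0_def B_def C_def by auto
      have "B \<subset> T" "C \<subset> T" "T0 \<subset> T" using ss unfolding T0_def B_def C_def by auto
      then have cB: "card B < card T" "card C < card T" "card T0 < card T"
        using psubset_card_mono[OF finT] by auto
      note IB = less.hyps[OF cB(1) sub(2)] and IC = less.hyps[OF cB(2) sub(3)] and I0 = less.hyps[OF cB(3) sub(1)]
      have pb0: "is_pullback (Q (T0 \<union> {s, s'})) (Q (T0 \<union> {s})) (Q (T0 \<union> {s'})) (Q T0)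
          (M (T0 \<union> {s}) (T0 \<union> {s, s'})) (M (T0 \<union> {s'}) (T0 \<union> {s, s'}))
          (M T0 (T0 \<union> {s})) (M T0 (T0 \<union> {s'}))"
        by (rule pbsq) (use TS ss in \<open>auto simp: T0_def\<close>)
      have pb: "is_pullback (Q T) (Q B) (Q C) (Q T0) (M B T) (M C T) (M T0 B) (M T0 C)"
        using pb0 unfolding TT B_def[symmetric] C_def[symmetric] .
      have injB: "\<And>k k'. k < Q B \<Longrightarrow> k' < Q B \<Longrightarrow> M {} B k = M {} B k' \<Longrightarrow> (\<forall>t\<in>B. M {t} B k = M {t} B k') \<Longrightarrow> k = k'"
        using conjunct1[OF IB] by blast
      have injC: "\<And>k k'. k < Q C \<Longrightarrow> k' < Q C \<Longrightarrow> M {} C k = M {} C k' \<Longrightarrow> (\<forall>t\<in>C. M {t} C k = M {t} C k') \<Longrightarrow> k = k'"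
        using conjunct1[OF IC] by blast
      have inj0: "\<And>k k'. k < Q T0 \<Longrightarrow> k' < Q T0 \<Longrightarrow> M {} T0 k = M {} T0 k' \<Longrightarrow> (\<forall>t\<in>T0. M {t} T0 k = M {t} T0 k') \<Longrightarrow> k = k'"
        using conjunct1[OF I0] by blast
      have surB: "\<And>i x. i < N \<Longrightarrow> (\<forall>t\<in>B. x t \<in> fiber I f t i) \<Longrightarrow> (\<exists>k<Q B. M {} B k = i \<and> (\<forall>t\<in>B. M {t} B k = x t))"
        using conjunct2[OF IB] by blast
      have surC: "\<And>i x. i < N \<Longrightarrow> (\<forall>t\<in>C. x t \<in> fiber I f t i) \<Longrightarrow> (\<exists>k<Q C. M {} C k = i \<and> (\<forall>t\<in>C. M {t} C k = x t))"
        using conjunct2[OF IC] by blast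
      have cmp: "M U V (M V T k) = M U T k" if "U \<subseteq> V" "V \<subseteq> T" "k < Q T" for U V k
        using Mcomp[OF that(1,2) _ that(3)] TS by blast
      have cmp0: "M U V (M V T0' k) = M U T0' k" if "U \<subseteq> V" "V \<subseteq> T0'" "T0' \<subseteq> S" "k < Q T0'" for U V T0' k
        using Mcomp[OF that] .
      show ?thesis
      proof (intro conjI allI impI)
        fix k k' assume k: "k < Q T" "k' < Q T" and e0: "M {} T k = M {} T k'"
          and et: "\<forall>t\<in>T. M {t} T k = M {t} T k'"
        have "M B T k = M B T k'"
        proof (rule injB)
          show "M B T k < Q B" "M B T k' < Q B" using Mlt[OF sub(6) TS] k by auto
          show "M {} B (M B T k) = M {} B (M B T k')" using cmp[OF sub(8) sub(6)] k e0 by simp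
          show "\<forall>t\<in>B. M {t} B (M B T k) = M {t} B (M B T k')"
          proof
            fix t assume t: "t \<in> B"
            then have "{t} \<subseteq> B" "t \<in> T" using sub(6) by auto
            then show "M {t} B (M B T k) = M {t} B (M B T k')" using cmp[OF _ sub(6)] k et by simp
          qed
        qed
        moreover have "M C T k = M C T k'"
        proof (rule injC)
          show "M C T k < Q C" "M C T k' < Q C" using Mlt[OF sub(7) TS] k by auto
          show "M {} C (M C T k) = M {} C (M C T k')" using cmp[OF sub(9) sub(7)] k e0 by simp
          show "\<forall>t\<in>C. M {t} C (M C T k) = M {t} C (M C T k')"
          proof
            fix t assume t: "t \<in> C"
            then have "{t} \<subseteq> C" "t \<in> T" using sub(7) by auto
            then show "M {t} C (M C T k) = M {t} C (M C T k')" using cmp[OF _ sub(7)] k et by simp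
          qed
        qed
        ultimately show "k = k'" using pb_inj[OF pb k] by simp
      next
        fix i x assume i: "i < N" and x: "\<forall>t\<in>T. x t \<in> fiber I f t i"
        have xB: "\<forall>t\<in>B. x t \<in> fiber I f t i" using x sub(6) by blast
        have xC: "\<forall>t\<in>C. x t \<in> fiber I f t i" using x sub(7) by blast
        obtain kb where kb: "kb < Q B" "M {} B kb = i" "\<forall>t\<in>B. M {t} B kb = x t"
          using surB[OF i xB] by blast
        obtain kc where kc: "kc < Q C" "M {} C kc = i" "\<forall>t\<in>C. M {t} C kc = x t"
          using surC[OF i xC] by blast
        have "M T0 B kb = M T0 C kc"
        proof (rule inj0)
          show "M T0 B kb < Q T0" using Mlt[OF sub(4) sub(2) kb(1)] .
          show "M T0 C kc < Q T0" using Mlt[OF sub(5) sub(3) kc(1)] .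
          have "M {} T0 (M T0 B kb) = i" using cmp0[OF _ sub(4) sub(2) kb(1)] kb(2) by simp
          moreover have "M {} T0 (M T0 C kc) = i" using cmp0[OF _ sub(5) sub(3) kc(1)] kc(2) by simp
          ultimately show "M {} T0 (M T0 B kb) = M {} T0 (M T0 C kc)" by simp
          show "\<forall>t\<in>T0. M {t} T0 (M T0 B kb) = M {t} T0 (M T0 C kc)"
          proof
            fix t assume t: "t \<in> T0"
            then have t': "{t} \<subseteq> T0" "t \<in> B" "t \<in> C" using sub(4,5) by auto
            have "M {t} T0 (M T0 B kb) = x t" using cmp0[OF t'(1) sub(4) sub(2) kb(1)] kb(3) t'(2) by simp
            moreover have "M {t} T0 (M T0 C kc) = x t" using cmp0[OF t'(1) sub(5) sub(3) kc(1)] kc(3) t'(3) by simp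
            ultimately show "M {t} T0 (M T0 B kb) = M {t} T0 (M T0 C kc)" by simp
          qed
        qed
        then obtain k where k: "k < Q T" "M B T k = kb" "M C T k = kc"
          using pb_ex[OF pb kb(1) kc(1)] by blast
        show "\<exists>k<Q T. M {} T k = i \<and> (\<forall>t\<in>T. M {t} T k = x t)"
        proof (intro exI conjI ballI)
          show "k < Q T" by fact
          show "M {} T k = i" using cmp[OF sub(8) sub(6) k(1)] k kb by simp
          fix t assume "t \<in> T"
          then have "t \<in> B \<or> t \<in> C" using TT B_def C_def by auto
          then show "M {t} T k = x t"
          proof
            assume t: "t \<in> B" then have "{t} \<subseteq> B" by simp
            then show ?thesis using cmp[OF _ sub(6) k(1)] k kb t by simp
          next
            assume t: "t \<in> C" then have "{t} \<subseteq> C" by simp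
            then show ?thesis using cmp[OF _ sub(7) k(1)] k kc t by simp
          qed
        qed
      qed
    qed
  qed
qed

lemma cinj: "T \<subseteq> S \<Longrightarrow> k < Q T \<Longrightarrow> k' < Q T \<Longrightarrow> M {} T k = M {} T k' \<Longrightarrow> (\<And>t. t \<in> T \<Longrightarrow> M {t} T k = M {t} T k') \<Longrightarrow> k = k'"
proof -
  assume a: "T \<subseteq> S" "k < Q T" "k' < Q T" "M {} T k = M {} T k'" "\<And>t. t \<in> T \<Longrightarrow> M {t} T k = M {t} T k'"
  have "\<forall>k<Q T. \<forall>k'<Q T. M {} T k = M {} T k' \<longrightarrow> (\<forall>t\<in>T. M {t} T k = M {t} T k') \<longrightarrow> k = k'"
    using inj_surj[OF a(1)] by (rule conjunct1)
  then show ?thesis using a by blast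
qed

lemma csurj: "T \<subseteq> S \<Longrightarrow> i < N \<Longrightarrow> (\<And>t. t \<in> T \<Longrightarrow> x t \<in> fiber I f t i) \<Longrightarrow> \<exists>k<Q T. M {} T k = i \<and> (\<forall>t\<in>T. M {t} T k = x t)"
proof -
  assume a: "T \<subseteq> S" "i < N" "\<And>t. t \<in> T \<Longrightarrow> x t \<in> fiber I f t i"
  have "\<forall>i<N. \<forall>x. (\<forall>t\<in>T. x t \<in> fiber I f t i) \<longrightarrow> (\<exists>k<Q T. M {} T k = i \<and> (\<forall>t\<in>T. M {t} T k = x t))"
    using inj_surj[OF a(1)] by (rule conjunct2)
  then show ?thesis using a by blast
qed

lemma cord: assumes "T \<subseteq> S" "k < Q T" "k' < Q T"
  "M {} T k < M {} T k' \<or> (M {} T k = M {} T k' \<and> (\<forall>t\<in>T. M {t} T k \<le> M {t} T k'))"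
  shows "k \<le> k'"
proof (rule ccontr)
  assume "\<not> k \<le> k'"
  then have lt: "k' \<le> k" by simp
  have m0: "M {} T k' \<le> M {} T k" using Mmono[of "{}" T k' k] assms lt by simp
  have mt: "M {t} T k' \<le> M {t} T k" if "t \<in> T" for t using Mmono[of "{t}" T k' k] assms lt that by auto
  have e1: "M {} T k = M {} T k'" using assms(4) m0 by auto
  have e2: "\<And>t. t \<in> T \<Longrightarrow> M {t} T k = M {t} T k'"
  proof -
    fix t assume "t \<in> T" then show "M {t} T k = M {t} T k'" using assms(4) e1 mt[of t] by auto
  qed
  have "k = k'" by (rule cinj[OF assms(1-3) e1 e2])
  then show False using \<open>\<not> k \<le> k'\<close> by simp
qed


lemma formula: "cech_formula S I N f Q M"
proof -
  define \<phi> where "\<phi> T k = (M {} T k, restrict (\<lambda>t. M {t} T k) T)" for T k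
  have A: "\<forall>T. T \<subseteq> S \<longrightarrow>
           bij_betw (\<phi> T) {..<Q T} (cech_obj I N f T) \<and>
           (\<forall>k<Q T. \<forall>k'<Q T. k \<le> k' \<longleftrightarrow> cech_le T (\<phi> T k) (\<phi> T k'))"
  proof (intro allI impI)
  fix T assume TS: "T \<subseteq> S"
  have hbij: "bij_betw (\<phi> T) {..<Q T} (cech_obj I N f T)"
    unfolding bij_betw_def
  proof
    show "inj_on (\<phi> T) {..<Q T}"
    proof (rule inj_onI)
      fix k k' assume k: "k \<in> {..<Q T}" "k' \<in> {..<Q T}" and e: "\<phi> T k = \<phi> T k'"
      have e1: "M {} T k = M {} T k'" using e unfolding \<phi>_def by simp
      have e2: "M {t} T k = M {t} T k'" if "t \<in> T" for t
      proof -
        have "restrict (\<lambda>t. M {t} T k) T t = restrict (\<lambda>t. M {t} T k') T t" using e unfolding \<phi>_def by simp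
        then show ?thesis using that by simp
      qed
      show "k = k'" using cinj[OF TS _ _ e1 e2] k by simp
    qed
    show "\<phi> T ` {..<Q T} = cech_obj I N f T"
    proof
      show "\<phi> T ` {..<Q T} \<subseteq> cech_obj I N f T"
      proof
        fix p assume "p \<in> \<phi> T ` {..<Q T}"
        then obtain k where k: "k < Q T" "p = \<phi> T k" by auto
        have "M {} T k < N" using Mfst[OF TS k(1)] .
        moreover have "restrict (\<lambda>t. M {t} T k) T \<in> (\<Pi>\<^sub>E t\<in>T. fiber I f t (M {} T k))"
          unfolding restrict_PiE_iff using fib[OF TS _ k(1)] by blast
        ultimately show "p \<in> cech_obj I N f T" unfolding cech_obj_def k(2) \<phi>_def by simp
      qed
      show "cech_obj I N f T \<subseteq> \<phi> T ` {..<Q T}"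
      proof
        fix p assume "p \<in> cech_obj I N f T"
        then obtain i x where p: "p = (i, x)" "i < N" "x \<in> (\<Pi>\<^sub>E t\<in>T. fiber I f t i)"
          unfolding cech_obj_def by auto
        have "\<And>t. t \<in> T \<Longrightarrow> x t \<in> fiber I f t i" using p(3) by auto
        from csurj[OF TS p(2) this] obtain k where k: "k < Q T" "M {} T k = i" "\<forall>t\<in>T. M {t} T k = x t"
          by blast
        have "restrict (\<lambda>t. M {t} T k) T = restrict x T" using k(3) by (intro restrict_ext) simp
        also have "\<dots> = x" using p(3) by simp
        finally have "\<phi> T k = p" unfolding \<phi>_def p(1) k(2) by simp
        then show "p \<in> \<phi> T ` {..<Q T}" using k(1) by force
      qed
    qed
  qed
  have hord: "\<forall>k<Q T. \<forall>k'<Q T. k \<le> k' \<longleftrightarrow> cech_le T (\<phi> T k) (\<phi> T k')"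
  proof (intro allI impI)
    fix k k' assume k: "k < Q T" "k' < Q T"
    show "k \<le> k' \<longleftrightarrow> cech_le T (\<phi> T k) (\<phi> T k')"
    proof
      assume le: "k \<le> k'"
      have "M {} T k \<le> M {} T k'" using Mmono[of "{}" T k k'] TS le k by simp
      moreover have "\<forall>t\<in>T. M {t} T k \<le> M {t} T k'" using Mmono[of _ T k k'] TS le k by auto
      ultimately show "cech_le T (\<phi> T k) (\<phi> T k')" unfolding cech_le_def \<phi>_def by auto
    next
      assume "cech_le T (\<phi> T k) (\<phi> T k')"
      then have "M {} T k < M {} T k' \<or> (M {} T k = M {} T k' \<and> (\<forall>t\<in>T. M {t} T k \<le> M {t} T k'))"
        unfolding cech_le_def \<phi>_def by simp
      then show "k \<le> k'" using cord[OF TS k] by blast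
    qed
  qed
  show "bij_betw (\<phi> T) {..<Q T} (cech_obj I N f T) \<and> (\<forall>k<Q T. \<forall>k'<Q T. k \<le> k' \<longleftrightarrow> cech_le T (\<phi> T k) (\<phi> T k'))"
    using hbij hord by (rule conjI)
  qed
  have B: "\<forall>T T'. T \<subseteq> T' \<longrightarrow> T' \<subseteq> S \<longrightarrow> (\<forall>k<Q T'.
           \<phi> T (M T T' k) = (fst (\<phi> T' k), restrict (snd (\<phi> T' k)) T))"
  proof (intro allI impI)
    fix T T' k assume TT: "T \<subseteq> T'" "T' \<subseteq> S" and k: "k < Q T'"
    have "M {} T (M T T' k) = M {} T' k" using Mcomp[of "{}" T T' k] TT k by simp
    moreover have "restrict (\<lambda>t. M {t} T (M T T' k)) T = restrict (restrict (\<lambda>t. M {t} T' k) T') T"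
    proof -
      have "restrict (restrict (\<lambda>t. M {t} T' k) T') T = restrict (\<lambda>t. M {t} T' k) T"
        using TT by (simp add: Int_absorb1)
      moreover have "restrict (\<lambda>t. M {t} T (M T T' k)) T = restrict (\<lambda>t. M {t} T' k) T"
        using Mcomp[of _ T T' k] TT k by (intro restrict_ext) auto
      ultimately show ?thesis by simp
    qed
    ultimately show "\<phi> T (M T T' k) = (fst (\<phi> T' k), restrict (snd (\<phi> T' k)) T)"
      unfolding \<phi>_def by simp
  qed
  show ?thesis unfolding cech_formula_def by (rule exI[of _ \<phi>], rule conjI[OF A B])
qed


lemma bc: "backwards_compatible S I N f"
  unfolding backwards_compatible_def
proof (intro allI impI ballI)
  fix i s s' assume i: "i < N" and s: "s \<in> S" "s' \<in> S"
    and c1: "1 < card (fiber I f s i)" and c2: "1 < card (fiber I f s' i)"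
  show "s = s'"
  proof (rule ccontr)
    assume ne: "s \<noteq> s'"
    obtain j1 j2 where j: "j1 \<in> fiber I f s i" "j2 \<in> fiber I f s i" "j1 < j2"
      using two_elems[OF fiber_finite c1] by blast
    obtain k1 k2 where k: "k1 \<in> fiber I f s' i" "k2 \<in> fiber I f s' i" "k1 < k2"
      using two_elems[OF fiber_finite c2] by blast
    have pb0: "is_pullback (Q ({} \<union> {s, s'})) (Q ({} \<union> {s})) (Q ({} \<union> {s'})) (Q {})
          (M ({} \<union> {s}) ({} \<union> {s, s'})) (M ({} \<union> {s'}) ({} \<union> {s, s'}))
          (M {} ({} \<union> {s})) (M {} ({} \<union> {s'}))"
      by (rule pbsq) (use s ne in auto)
    then have pb: "is_pullback (Q {s, s'}) (Q {s}) (Q {s'}) (Q {})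
          (M {s} {s, s'}) (M {s'} {s, s'}) (M {} {s}) (M {} {s'})" by simp
    have jj: "j1 < I s" "j2 < I s" "f s j1 = i" "f s j2 = i" using j unfolding fiber_def by auto
    have kk: "k1 < I s'" "k2 < I s'" "f s' k1 = i" "f s' k2 = i" using k unfolding fiber_def by auto
    obtain a1 where a1: "a1 < Q {s, s'}" "M {s} {s, s'} a1 = j1" "M {s'} {s, s'} a1 = k2"
      using pb_ex[OF pb, of j1 k2] jj kk Qs[OF s(1)] Qs[OF s(2)] Ms[OF s(1)] Ms[OF s(2)] by auto
    obtain a2 where a2: "a2 < Q {s, s'}" "M {s} {s, s'} a2 = j2" "M {s'} {s, s'} a2 = k1"
      using pb_ex[OF pb, of j2 k1] jj kk Qs[OF s(1)] Qs[OF s(2)] Ms[OF s(1)] Ms[OF s(2)] by auto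
    have dp: "dmor (Q {s, s'}) (Q {s}) (M {s} {s, s'})" "dmor (Q {s, s'}) (Q {s'}) (M {s'} {s, s'})"
      using pb by (auto simp: is_pullback_def is_square_def)
    show False
    proof (cases "a1 \<le> a2")
      case True
      have "M {s'} {s, s'} a1 \<le> M {s'} {s, s'} a2" by (rule dmorD2[OF dp(2) True a2(1)])
      then show False using a1 a2 k by simp
    next
      case False
      then have "a2 \<le> a1" by simp
      have "M {s} {s, s'} a2 \<le> M {s} {s, s'} a1" by (rule dmorD2[OF dp(1) \<open>a2 \<le> a1\<close> a1(1)])
      then show False using a1 a2 j by simp
    qed
  qed
qed

end

lemma po_univ:
  assumes "is_pushout a b c d p q u v" "dmor b x g" "dmor c x h" "meq a (g \<circ> p) (h \<circ> q)"
  obtains w where "dmor d x w" "meq b (w \<circ> u) g" "meq c (w \<circ> v) h"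
    "\<And>w'. dmor d x w' \<Longrightarrow> meq b (w' \<circ> u) g \<Longrightarrow> meq c (w' \<circ> v) h \<Longrightarrow> meq d w' w"
  using assms unfolding is_pushout_def by blast

lemma sq_parts:
  assumes "is_square a b c d p q u v"
  shows "dmor a b p" "dmor a c q" "dmor b d u" "dmor c d v" "\<And>\<alpha>. \<alpha> < a \<Longrightarrow> u (p \<alpha>) = v (q \<alpha>)"
  using assms by (auto simp: is_square_def meq_def)

lemma po_sq: "is_pushout a b c d p q u v \<Longrightarrow> is_square a b c d p q u v"
  by (simp add: is_pushout_def)

lemma PF1:
  assumes po: "is_pushout a b c d p q u v" and dl: "\<delta> < d"
    and nb: "\<not> (\<exists>\<beta><b. u \<beta> = \<delta>)" and nc: "\<not> (\<exists>\<gamma><c. v \<gamma> = \<delta>)"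
  shows False
proof -
  note sq = sq_parts[OF po_sq[OF po]]
  define g where "g \<beta> = (if \<delta> < u \<beta> then 1 else (0::nat))" for \<beta>
  define h where "h \<gamma> = (if \<delta> < v \<gamma> then 1 else (0::nat))" for \<gamma>
  define w1 where "w1 e = (if \<delta> \<le> e then 1 else (0::nat))" for e
  define w2 where "w2 e = (if \<delta> < e then 1 else (0::nat))" for e
  have g: "dmor b 2 g" unfolding dmor_def g_def using dmorD2[OF sq(3)] by (auto simp: order_less_le_trans)
  have h: "dmor c 2 h" unfolding dmor_def h_def using dmorD2[OF sq(4)] by (auto simp: order_less_le_trans)
  have gh: "meq a (g \<circ> p) (h \<circ> q)" unfolding meq_def g_def h_def using sq(5) by auto
  obtain w where U: "\<And>w'. dmor d 2 w' \<Longrightarrow> meq b (w' \<circ> u) g \<Longrightarrow> meq c (w' \<circ> v) h \<Longrightarrow> meq d w' w"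
    using po_univ[OF po g h gh] by metis
  have "meq d w1 w"
  proof (rule U)
    show "dmor d 2 w1" unfolding dmor_def w1_def by auto
    show "meq b (w1 \<circ> u) g" unfolding meq_def w1_def g_def using nb by fastforce
    show "meq c (w1 \<circ> v) h" unfolding meq_def w1_def h_def using nc by fastforce
  qed
  moreover have "meq d w2 w"
  proof (rule U)
    show "dmor d 2 w2" unfolding dmor_def w2_def by auto
    show "meq b (w2 \<circ> u) g" unfolding meq_def w2_def g_def by auto
    show "meq c (w2 \<circ> v) h" unfolding meq_def w2_def h_def by auto
  qed
  ultimately have "w1 \<delta> = w2 \<delta>" using dl unfolding meq_def by auto
  then show False unfolding w1_def w2_def by simp
qed

lemma PF2:
  assumes po: "is_pushout a b c d p q u v"
    and nb: "\<not> (\<exists>\<beta><b. u \<beta> = \<delta>)" and g12: "\<gamma>1 < \<gamma>2" "\<gamma>2 < c" "v \<gamma>1 = \<delta>" "v \<gamma>2 = \<delta>"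
  shows False
proof -
  note sq = sq_parts[OF po_sq[OF po]]
  define g where "g \<beta> = (if \<delta> < u \<beta> then 1 else (0::nat))" for \<beta>
  define h where "h \<gamma> = (if \<gamma>2 \<le> \<gamma> then 1 else (0::nat))" for \<gamma>
  have g: "dmor b 2 g" unfolding dmor_def g_def using dmorD2[OF sq(3)] by (auto simp: order_less_le_trans)
  have h: "dmor c 2 h" unfolding dmor_def h_def by auto
  have gh: "meq a (g \<circ> p) (h \<circ> q)" unfolding meq_def
  proof (intro allI impI)
    fix \<alpha> assume al: "\<alpha> < a"
    have pa: "p \<alpha> < b" "q \<alpha> < c" using al dmorD1[OF sq(1)] dmorD1[OF sq(2)] by auto
    have e: "u (p \<alpha>) = v (q \<alpha>)" using sq(5)[OF al] .
    have ne: "u (p \<alpha>) \<noteq> \<delta>" using nb pa by auto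
    show "(g \<circ> p) \<alpha> = (h \<circ> q) \<alpha>"
    proof (cases "\<delta> < u (p \<alpha>)")
      case True
      have "\<gamma>2 \<le> q \<alpha>"
      proof (rule ccontr)
        assume "\<not> \<gamma>2 \<le> q \<alpha>"
        then have "v (q \<alpha>) \<le> v \<gamma>2" using dmorD2[OF sq(4), of "q \<alpha>" \<gamma>2] g12 by simp
        then show False using True e g12 by simp
      qed
      then show ?thesis using True unfolding g_def h_def by simp
    next
      case False
      then have lt: "u (p \<alpha>) < \<delta>" using ne by simp
      have "\<not> \<gamma>2 \<le> q \<alpha>"
      proof
        assume "\<gamma>2 \<le> q \<alpha>"
        then have "v \<gamma>2 \<le> v (q \<alpha>)" using dmorD2[OF sq(4), of \<gamma>2 "q \<alpha>"] pa by simp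
        then show False using lt e g12 by simp
      qed
      then show ?thesis using False unfolding g_def h_def by simp
    qed
  qed
  obtain w where W: "meq c (w \<circ> v) h"
    using po_univ[OF po g h gh] by metis
  have "w (v \<gamma>1) = h \<gamma>1" "w (v \<gamma>2) = h \<gamma>2" using W g12 unfolding meq_def by auto
  then show False using g12 unfolding h_def by simp
qed

lemma PF3:
  assumes po: "is_pushout a b c d p q u v" and dl: "Suc \<delta> < d"
    and nb: "\<not> (\<exists>\<beta><b. u \<beta> = \<delta>)" and nc: "\<not> (\<exists>\<gamma><c. v \<gamma> = Suc \<delta>)"
    and gg: "\<gamma> < c" "v \<gamma> = \<delta>" and bb: "\<beta>' < b" "u \<beta>' = Suc \<delta>"
  shows False
proof -
  note sq = sq_parts[OF po_sq[OF po]]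
  define g where "g \<beta> = (if Suc \<delta> < u \<beta> then 1 else (0::nat))" for \<beta>
  define h where "h \<gamma> = (if \<delta> \<le> v \<gamma> then 1 else (0::nat))" for \<gamma>
  have g: "dmor b 2 g" unfolding dmor_def g_def using dmorD2[OF sq(3)] by (auto simp: order_less_le_trans)
  have h: "dmor c 2 h" unfolding dmor_def h_def using dmorD2[OF sq(4)] by (auto simp: order_trans)
  have gh: "meq a (g \<circ> p) (h \<circ> q)" unfolding meq_def
  proof (intro allI impI)
    fix \<alpha> assume al: "\<alpha> < a"
    have pa: "p \<alpha> < b" "q \<alpha> < c" using al dmorD1[OF sq(1)] dmorD1[OF sq(2)] by auto
    have e: "u (p \<alpha>) = v (q \<alpha>)" using sq(5)[OF al] .
    have ne: "u (p \<alpha>) \<noteq> \<delta>" "v (q \<alpha>) \<noteq> Suc \<delta>" using nb nc pa by auto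
    show "(g \<circ> p) \<alpha> = (h \<circ> q) \<alpha>" unfolding g_def h_def using e ne by auto
  qed
  obtain w where W: "dmor d 2 w" "meq b (w \<circ> u) g" "meq c (w \<circ> v) h"
    using po_univ[OF po g h gh] by metis
  have "w \<delta> = 1" using W(3) gg unfolding meq_def h_def by (metis comp_apply order_refl)
  moreover have "w (Suc \<delta>) = 0" using W(2) bb unfolding meq_def g_def by (metis comp_apply less_irrefl)
  moreover have "w \<delta> \<le> w (Suc \<delta>)" using dmorD2[OF W(1), of \<delta> "Suc \<delta>"] dl by simp
  ultimately show False by simp
qed



lemma pushout_intro:
  assumes sq: "is_square a b c d p q u v"
    and pb: "\<And>\<beta> \<gamma>. \<beta> < b \<Longrightarrow> \<gamma> < c \<Longrightarrow> u \<beta> = v \<gamma> \<Longrightarrow> \<exists>\<alpha><a. p \<alpha> = \<beta> \<and> q \<alpha> = \<gamma>"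
    and K1: "\<And>\<delta>. \<delta> < d \<Longrightarrow> (\<exists>\<beta><b. u \<beta> = \<delta>) \<or> (\<exists>\<gamma><c. v \<gamma> = \<delta>)"
    and K2: "\<And>\<delta> \<beta> \<beta>'. \<delta> < d \<Longrightarrow> \<not> (\<exists>\<gamma><c. v \<gamma> = \<delta>) \<Longrightarrow> \<beta> < b \<Longrightarrow> \<beta>' < b \<Longrightarrow> u \<beta> = \<delta> \<Longrightarrow> u \<beta>' = \<delta> \<Longrightarrow> \<beta> = \<beta>'"
    and K3: "\<And>\<delta> \<gamma> \<gamma>'. \<delta> < d \<Longrightarrow> \<not> (\<exists>\<beta><b. u \<beta> = \<delta>) \<Longrightarrow> \<gamma> < c \<Longrightarrow> \<gamma>' < c \<Longrightarrow> v \<gamma> = \<delta> \<Longrightarrow> v \<gamma>' = \<delta> \<Longrightarrow> \<gamma> = \<gamma>'"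
    and Mon: "\<And>\<delta> \<delta>'. \<delta> < \<delta>' \<Longrightarrow> \<delta>' < d \<Longrightarrow>
        (\<exists>\<beta><b. \<exists>\<beta>'<b. u \<beta> = \<delta> \<and> u \<beta>' = \<delta>' \<and> \<beta> \<le> \<beta>') \<or>
        (\<exists>\<gamma><c. \<exists>\<gamma>'<c. v \<gamma> = \<delta> \<and> v \<gamma>' = \<delta>' \<and> \<gamma> \<le> \<gamma>') \<or>
        (\<exists>\<beta><b. \<exists>\<alpha><a. \<exists>\<gamma>'<c. u \<beta> = \<delta> \<and> v \<gamma>' = \<delta>' \<and> \<beta> \<le> p \<alpha> \<and> q \<alpha> \<le> \<gamma>') \<or>
        (\<exists>\<gamma><c. \<exists>\<alpha><a. \<exists>\<beta>'<b. v \<gamma> = \<delta> \<and> u \<beta>' = \<delta>' \<and> \<gamma> \<le> q \<alpha> \<and> p \<alpha> \<le> \<beta>')"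
  shows "is_pushout a b c d p q u v"
  unfolding is_pushout_def
proof (intro conjI sq allI impI)
  fix x g h assume H: "dmor b x g \<and> dmor c x h \<and> meq a (g \<circ> p) (h \<circ> q)"
  then have g: "dmor b x g" and h: "dmor c x h" and gh0: "\<And>\<alpha>. \<alpha> < a \<Longrightarrow> g (p \<alpha>) = h (q \<alpha>)"
    by (auto simp: meq_def)
  note sqd = sq_parts[OF sq]
  have gh: "g \<beta> = h \<gamma>" if "\<beta> < b" "\<gamma> < c" "u \<beta> = v \<gamma>" for \<beta> \<gamma>
    using pb[OF that] gh0 by auto
  define W where "W \<delta> = (if \<exists>\<beta><b. u \<beta> = \<delta> then g (SOME \<beta>. \<beta> < b \<and> u \<beta> = \<delta>) else h (SOME \<gamma>. \<gamma> < c \<and> v \<gamma> = \<delta>))" for \<delta>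
  have WB: "W \<delta> = g \<beta>" if "\<delta> < d" "\<beta> < b" "u \<beta> = \<delta>" for \<delta> \<beta>
  proof -
    have ex: "\<exists>\<beta><b. u \<beta> = \<delta>" using that by blast
    define \<beta>0 where "\<beta>0 = (SOME \<beta>. \<beta> < b \<and> u \<beta> = \<delta>)"
    have b0: "\<beta>0 < b" "u \<beta>0 = \<delta>" using someI_ex[OF ex] unfolding \<beta>0_def by auto
    have "W \<delta> = g \<beta>0" unfolding W_def \<beta>0_def using ex by simp
    also have "g \<beta>0 = g \<beta>"
    proof (cases "\<exists>\<gamma><c. v \<gamma> = \<delta>")
      case True then obtain \<gamma> where "\<gamma> < c" "v \<gamma> = \<delta>" by blast
      then show ?thesis using gh[of \<beta>0 \<gamma>] gh[of \<beta> \<gamma>] b0 that by simp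
    next
      case False then show ?thesis using K2[OF that(1) False b0(1) that(2) b0(2) that(3)] by simp
    qed
    finally show ?thesis .
  qed
  have WC: "W \<delta> = h \<gamma>" if "\<delta> < d" "\<gamma> < c" "v \<gamma> = \<delta>" for \<delta> \<gamma>
  proof (cases "\<exists>\<beta><b. u \<beta> = \<delta>")
    case True then obtain \<beta> where "\<beta> < b" "u \<beta> = \<delta>" by blast
    then show ?thesis using WB[OF that(1) \<open>\<beta> < b\<close>] gh[of \<beta> \<gamma>] that by simp
  next
    case False
    define \<gamma>0 where "\<gamma>0 = (SOME \<gamma>. \<gamma> < c \<and> v \<gamma> = \<delta>)"
    have ex: "\<exists>\<gamma><c. v \<gamma> = \<delta>" using that by blast
    have c0: "\<gamma>0 < c" "v \<gamma>0 = \<delta>" using someI_ex[OF ex] unfolding \<gamma>0_def by auto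
    have "W \<delta> = h \<gamma>0" unfolding W_def \<gamma>0_def by (rule if_not_P[OF False])
    then show ?thesis using K3[OF that(1) False c0(1) that(2) c0(2) that(3)] by simp
  qed
  have Wx: "W \<delta> < x" if dl0: "\<delta> < d" for \<delta>
  proof (cases "\<exists>\<beta><b. u \<beta> = \<delta>")
    case True then obtain \<beta> where "\<beta> < b" "u \<beta> = \<delta>" by blast
    then show ?thesis using WB[OF dl0] dmorD1[OF g] by simp
  next
    case False then obtain \<gamma> where "\<gamma> < c" "v \<gamma> = \<delta>" using K1[OF dl0] by blast
    then show ?thesis using WC[OF dl0] dmorD1[OF h] by simp
  qed
  show "\<exists>w. dmor d x w \<and> meq b (w \<circ> u) g \<and> meq c (w \<circ> v) h \<and>
           (\<forall>w'. dmor d x w' \<and> meq b (w' \<circ> u) g \<and> meq c (w' \<circ> v) h \<longrightarrow> meq d w' w)"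
  proof (intro exI conjI allI impI)
    show "dmor d x W" unfolding dmor_def
    proof (intro conjI allI impI)
      fix \<delta> assume "\<delta> < d" then show "W \<delta> < x" by (rule Wx)
    next
      fix \<delta> \<delta>' assume le: "\<delta> \<le> \<delta>'" "\<delta>' < d"
      show "W \<delta> \<le> W \<delta>'"
      proof (cases "\<delta> = \<delta>'")
        case True then show ?thesis by simp
      next
        case False then have lt: "\<delta> < \<delta>'" using le by simp
        have dl: "\<delta> < d" using lt le by simp
        from Mon[OF lt le(2)] show ?thesis
        proof (elim disjE exE conjE)
          fix \<beta> \<beta>' assume A: "\<beta> < b" "\<beta>' < b" "u \<beta> = \<delta>" "u \<beta>' = \<delta>'" "\<beta> \<le> \<beta>'"
          have "g \<beta> \<le> g \<beta>'" by (rule dmorD2[OF g A(5) A(2)])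
          then show ?thesis using WB[OF dl A(1) A(3)] WB[OF le(2) A(2) A(4)] by simp
        next
          fix \<gamma> \<gamma>' assume A: "\<gamma> < c" "\<gamma>' < c" "v \<gamma> = \<delta>" "v \<gamma>' = \<delta>'" "\<gamma> \<le> \<gamma>'"
          have "h \<gamma> \<le> h \<gamma>'" by (rule dmorD2[OF h A(5) A(2)])
          then show ?thesis using WC[OF dl A(1) A(3)] WC[OF le(2) A(2) A(4)] by simp
        next
          fix \<beta> \<alpha> \<gamma>' assume A: "\<beta> < b" "\<alpha> < a" "\<gamma>' < c" "u \<beta> = \<delta>" "v \<gamma>' = \<delta>'" "\<beta> \<le> p \<alpha>" "q \<alpha> \<le> \<gamma>'"
          have pa: "p \<alpha> < b" "q \<alpha> < c" using A(2) dmorD1[OF sqd(1)] dmorD1[OF sqd(2)] by auto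
          have "g \<beta> \<le> g (p \<alpha>)" by (rule dmorD2[OF g A(6) pa(1)])
          moreover have "h (q \<alpha>) \<le> h \<gamma>'" by (rule dmorD2[OF h A(7) A(3)])
          ultimately show ?thesis using WB[OF dl A(1) A(4)] WC[OF le(2) A(3) A(5)] gh0[OF A(2)] by simp
        next
          fix \<gamma> \<alpha> \<beta>' assume A: "\<gamma> < c" "\<alpha> < a" "\<beta>' < b" "v \<gamma> = \<delta>" "u \<beta>' = \<delta>'" "\<gamma> \<le> q \<alpha>" "p \<alpha> \<le> \<beta>'"
          have pa: "p \<alpha> < b" "q \<alpha> < c" using A(2) dmorD1[OF sqd(1)] dmorD1[OF sqd(2)] by auto
          have "h \<gamma> \<le> h (q \<alpha>)" by (rule dmorD2[OF h A(6) pa(2)])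
          moreover have "g (p \<alpha>) \<le> g \<beta>'" by (rule dmorD2[OF g A(7) A(3)])
          ultimately show ?thesis using WC[OF dl A(1) A(4)] WB[OF le(2) A(3) A(5)] gh0[OF A(2)] by simp
        qed
      qed
    qed
    show "meq b (W \<circ> u) g" unfolding meq_def
    proof (intro allI impI)
      fix \<beta> assume "\<beta> < b"
      then show "(W \<circ> u) \<beta> = g \<beta>" using WB[OF dmorD1[OF sqd(3)]] by simp
    qed
    show "meq c (W \<circ> v) h" unfolding meq_def
    proof (intro allI impI)
      fix \<gamma> assume "\<gamma> < c"
      then show "(W \<circ> v) \<gamma> = h \<gamma>" using WC[OF dmorD1[OF sqd(4)]] by simp
    qed
    fix w' assume "dmor d x w' \<and> meq b (w' \<circ> u) g \<and> meq c (w' \<circ> v) h"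
    then have w': "meq b (w' \<circ> u) g" "meq c (w' \<circ> v) h" by auto
    show "meq d w' W" unfolding meq_def
    proof (intro allI impI)
      fix \<delta> assume dl: "\<delta> < d"
      from K1[OF dl] show "w' \<delta> = W \<delta>"
      proof (elim disjE exE conjE)
        fix \<beta> assume "\<beta> < b" "u \<beta> = \<delta>"
        then show ?thesis using w'(1) WB[OF dl] unfolding meq_def by force
      next
        fix \<gamma> assume "\<gamma> < c" "v \<gamma> = \<delta>"
        then show ?thesis using w'(2) WC[OF dl] unfolding meq_def by force
      qed
    qed
  qed
qed

lemma bridge:
  assumes comp: "compatible S I N f" and A: "A \<subseteq> S" and ss: "s \<in> A" "s' \<in> A" "s \<noteq> s'"
    and ii: "i < i'" "i' < N" and m1: "fiber I f s' i = {}" and m2: "fiber I f s i' = {}"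
  shows "\<exists>m. i < m \<and> m < i' \<and> (\<forall>t\<in>A. fiber I f t m \<noteq> {})"
proof (rule ccontr)
  assume nb: "\<not> ?thesis"
  have img: "{j - 1, j} \<subseteq> f t ` {..<I t} \<longleftrightarrow> fiber I f t (j - 1) \<noteq> {} \<and> fiber I f t j \<noteq> {}" for t j
    by (simp add: fiber_ne)
  have bc2: "\<And>j t t'. 0 < j \<Longrightarrow> j < N \<Longrightarrow> t \<in> S \<Longrightarrow> t' \<in> S \<Longrightarrow>
      (fiber I f t (j - 1) = {} \<or> fiber I f t j = {}) \<Longrightarrow> (fiber I f t' (j - 1) = {} \<or> fiber I f t' j = {}) \<Longrightarrow> t = t'"
  proof -
    fix j t t' assume a: "0 < j" "j < N" "t \<in> S" "t' \<in> S"
      "fiber I f t (j - 1) = {} \<or> fiber I f t j = {}" "fiber I f t' (j - 1) = {} \<or> fiber I f t' j = {}"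
    then have "\<not> {j - 1, j} \<subseteq> f t ` {..<I t}" "\<not> {j - 1, j} \<subseteq> f t' ` {..<I t'}" using img by blast+
    then show "t = t'" using comp a(1-4) unfolding compatible_def by blast
  qed
  have step: "\<forall>k. i + k < i' \<longrightarrow> fiber I f s' (i + k) = {}"
  proof
    fix k show "i + k < i' \<longrightarrow> fiber I f s' (i + k) = {}"
    proof (induction k)
      case 0 then show ?case using m1 by simp
    next
      case (Suc k)
      show ?case
      proof
        assume lt: "i + Suc k < i'"
        then have IH: "fiber I f s' (i + k) = {}" using Suc by simp
        obtain t where t: "t \<in> A" "fiber I f t (i + Suc k) = {}" using nb lt by auto
        have "t = s'" by (rule bc2[of "i + Suc k"]) (use lt ii t A ss IH in auto)
        then show "fiber I f s' (i + Suc k) = {}" using t by simp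
      qed
    qed
  qed
  have "fiber I f s' (i' - 1) = {}" using step[rule_format, of "i' - 1 - i"] ii by simp
  then have "s' = s" using bc2[of i' s' s] ii ss A m2 by auto
  then show False using ss by simp
qed


lemma comp_bc1: "compatible S I N f \<Longrightarrow> i < N \<Longrightarrow> s \<in> S \<Longrightarrow> s' \<in> S \<Longrightarrow> s \<noteq> s' \<Longrightarrow>
    card (fiber I f s i) = 1 \<or> card (fiber I f s' i) = 1"
  unfolding compatible_def by blast

lemma card1_ne: "card A = 1 \<Longrightarrow> A \<noteq> {}" by auto

context ccube
begin

lemma ext_ne:
  assumes T0: "T0 \<subseteq> S" and s: "s \<in> S" "s \<notin> T0" and dl: "\<delta> < Q T0"
  shows "(\<exists>\<beta><Q (T0 \<union> {s}). M T0 (T0 \<union> {s}) \<beta> = \<delta>) \<longleftrightarrow> fiber I f s (M {} T0 \<delta>) \<noteq> {}"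
proof
  have BS: "T0 \<union> {s} \<subseteq> S" "T0 \<subseteq> T0 \<union> {s}" "{} \<subseteq> T0" using T0 s by auto
  assume "\<exists>\<beta><Q (T0 \<union> {s}). M T0 (T0 \<union> {s}) \<beta> = \<delta>"
  then obtain \<beta> where b: "\<beta> < Q (T0 \<union> {s})" "M T0 (T0 \<union> {s}) \<beta> = \<delta>" by blast
  have "M {s} (T0 \<union> {s}) \<beta> \<in> fiber I f s (M {} (T0 \<union> {s}) \<beta>)" using fib[OF BS(1) _ b(1)] by simp
  moreover have "M {} (T0 \<union> {s}) \<beta> = M {} T0 \<delta>" using Mcomp[OF BS(3) BS(2) BS(1) b(1)] b(2) by simp
  ultimately show "fiber I f s (M {} T0 \<delta>) \<noteq> {}" by auto
next
  have BS: "T0 \<union> {s} \<subseteq> S" "T0 \<subseteq> T0 \<union> {s}" "{} \<subseteq> T0" using T0 s by auto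
  assume "fiber I f s (M {} T0 \<delta>) \<noteq> {}"
  then obtain y where y: "y \<in> fiber I f s (M {} T0 \<delta>)" by blast
  define x where "x t = (if t = s then y else M {t} T0 \<delta>)" for t
  have xf: "x t \<in> fiber I f t (M {} T0 \<delta>)" if "t \<in> T0 \<union> {s}" for t
    using that y fib[OF T0 _ dl] unfolding x_def by auto
  obtain \<beta> where b: "\<beta> < Q (T0 \<union> {s})" "M {} (T0 \<union> {s}) \<beta> = M {} T0 \<delta>" "\<forall>t\<in>T0 \<union> {s}. M {t} (T0 \<union> {s}) \<beta> = x t"
    using csurj[OF BS(1) Mfst[OF T0 dl] xf] by blast
  have "M T0 (T0 \<union> {s}) \<beta> = \<delta>"
  proof (rule cinj[OF T0 Mlt[OF BS(2) BS(1) b(1)] dl])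
    show "M {} T0 (M T0 (T0 \<union> {s}) \<beta>) = M {} T0 \<delta>" using Mcomp[OF BS(3) BS(2) BS(1) b(1)] b(2) by simp
    fix t assume t: "t \<in> T0"
    then have "{t} \<subseteq> T0" "t \<noteq> s" using s by auto
    then show "M {t} T0 (M T0 (T0 \<union> {s}) \<beta>) = M {t} T0 \<delta>"
      using Mcomp[OF \<open>{t} \<subseteq> T0\<close> BS(2) BS(1) b(1)] b(3) t unfolding x_def by simp
  qed
  then show "\<exists>\<beta><Q (T0 \<union> {s}). M T0 (T0 \<union> {s}) \<beta> = \<delta>" using b(1) by blast
qed

lemma ext_cmp:
  assumes T0: "T0 \<subseteq> S" and s: "s \<in> S" and b: "\<beta> < Q (T0 \<union> {s})"
  shows "M {} (T0 \<union> {s}) \<beta> = M {} T0 (M T0 (T0 \<union> {s}) \<beta>)"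
    "\<And>t. t \<in> T0 \<Longrightarrow> M {t} (T0 \<union> {s}) \<beta> = M {t} T0 (M T0 (T0 \<union> {s}) \<beta>)"
proof -
  have BS: "T0 \<union> {s} \<subseteq> S" "T0 \<subseteq> T0 \<union> {s}" "{} \<subseteq> T0" using T0 s by auto
  show "M {} (T0 \<union> {s}) \<beta> = M {} T0 (M T0 (T0 \<union> {s}) \<beta>)" using Mcomp[OF BS(3) BS(2) BS(1) b] by simp
  fix t assume "t \<in> T0" then have "{t} \<subseteq> T0" by simp
  then show "M {t} (T0 \<union> {s}) \<beta> = M {t} T0 (M T0 (T0 \<union> {s}) \<beta>)" using Mcomp[OF _ BS(2) BS(1) b] by simp
qed

lemma ext_same:
  assumes T0: "T0 \<subseteq> S" and s: "s \<in> S" "s \<notin> T0" and dl: "\<delta> \<le> \<delta>'" "\<delta>' < Q T0"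
    and e: "M {} T0 \<delta> = M {} T0 \<delta>'" and c: "card (fiber I f s (M {} T0 \<delta>)) \<le> 1"
    and b: "\<beta> < Q (T0 \<union> {s})" "\<beta>' < Q (T0 \<union> {s})" "M T0 (T0 \<union> {s}) \<beta> = \<delta>" "M T0 (T0 \<union> {s}) \<beta>' = \<delta>'"
  shows "\<beta> \<le> \<beta>'"
proof (rule cord[OF _ b(1,2)])
  show BS: "T0 \<union> {s} \<subseteq> S" using T0 s by auto
  have e1: "M {} (T0 \<union> {s}) \<beta> = M {} (T0 \<union> {s}) \<beta>'" using ext_cmp(1)[OF T0 s(1) b(1)] ext_cmp(1)[OF T0 s(1) b(2)] b e by simp
  have "\<forall>t\<in>T0 \<union> {s}. M {t} (T0 \<union> {s}) \<beta> \<le> M {t} (T0 \<union> {s}) \<beta>'"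
  proof
    fix t assume "t \<in> T0 \<union> {s}"
    then consider "t \<in> T0" | "t = s" by auto
    then show "M {t} (T0 \<union> {s}) \<beta> \<le> M {t} (T0 \<union> {s}) \<beta>'"
    proof cases
      case 1
      then have "{t} \<subseteq> T0" by simp
      then show ?thesis using ext_cmp(2)[OF T0 s(1) b(1) 1] ext_cmp(2)[OF T0 s(1) b(2) 1] b Mmono[OF _ T0 dl] by simp
    next
      case 2
      have "M {s} (T0 \<union> {s}) \<beta> \<in> fiber I f s (M {} T0 \<delta>)"
        using fib[OF BS _ b(1)] ext_cmp(1)[OF T0 s(1) b(1)] b(3) by simp
      moreover have "M {s} (T0 \<union> {s}) \<beta>' \<in> fiber I f s (M {} T0 \<delta>)"
        using fib[OF BS _ b(2)] ext_cmp(1)[OF T0 s(1) b(2)] b(4) e by simp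
      ultimately have "M {s} (T0 \<union> {s}) \<beta> = M {s} (T0 \<union> {s}) \<beta>'" by (rule card_one_eq[OF fiber_finite c])
      then show ?thesis using 2 by simp
    qed
  qed
  then show "M {} (T0 \<union> {s}) \<beta> < M {} (T0 \<union> {s}) \<beta>' \<or>
    M {} (T0 \<union> {s}) \<beta> = M {} (T0 \<union> {s}) \<beta>' \<and> (\<forall>t\<in>T0 \<union> {s}. M {t} (T0 \<union> {s}) \<beta> \<le> M {t} (T0 \<union> {s}) \<beta>')"
    using e1 by blast
qed

lemma ext_uniq:
  assumes T0: "T0 \<subseteq> S" and s: "s \<in> S" "s \<notin> T0" and dl: "\<delta> < Q T0"
    and c: "card (fiber I f s (M {} T0 \<delta>)) \<le> 1"
    and b: "\<beta> < Q (T0 \<union> {s})" "\<beta>' < Q (T0 \<union> {s})" "M T0 (T0 \<union> {s}) \<beta> = \<delta>" "M T0 (T0 \<union> {s}) \<beta>' = \<delta>"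
  shows "\<beta> = \<beta>'"
  using ext_same[OF T0 s order_refl dl refl c b] ext_same[OF T0 s order_refl dl refl c b(2,1,4,3)] by simp

lemma ext_lt:
  assumes T0: "T0 \<subseteq> S" and s: "s \<in> S"
    and b: "\<beta> < Q (T0 \<union> {s})" "\<beta>' < Q (T0 \<union> {s})"
    and lt: "M {} (T0 \<union> {s}) \<beta> < M {} (T0 \<union> {s}) \<beta>'"
  shows "\<beta> \<le> \<beta>'"
  by (rule cord[OF _ b]) (use T0 s lt in auto)

lemma single_ex: "s \<in> S \<Longrightarrow> (\<exists>\<beta><Q {s}. M {} {s} \<beta> = m) \<longleftrightarrow> fiber I f s m \<noteq> {}"
  using Qs Ms unfolding fiber_def by auto

end


context ccube
begin

lemma cocart:
  assumes comp: "compatible S I N f"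
  shows "strongly_cocartesian S Q M"
  unfolding strongly_cocartesian_def
proof (intro allI impI)
  fix T0 s s' assume T0: "T0 \<subseteq> S" and s: "s \<in> S" and s': "s' \<in> S" and ne: "s \<noteq> s'"
    and ns: "s \<notin> T0" and ns': "s' \<notin> T0"
  define A where "A = T0 \<union> {s, s'}"
  define B where "B = T0 \<union> {s}"
  define C where "C = T0 \<union> {s'}"
  have sub: "A \<subseteq> S" "B \<subseteq> A" "C \<subseteq> A" "{} \<subseteq> B" "{} \<subseteq> C" "B \<subseteq> S" "C \<subseteq> S" "s \<in> A" "s' \<in> A"
    using T0 s s' unfolding A_def B_def C_def by auto
  have pb: "is_pullback (Q A) (Q B) (Q C) (Q T0) (M B A) (M C A) (M T0 B) (M T0 C)"
    using pbsq[OF T0 s s' ne ns ns'] unfolding A_def B_def C_def .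
  have sq: "is_square (Q A) (Q B) (Q C) (Q T0) (M B A) (M C A) (M T0 B) (M T0 C)"
    using pb by (simp add: is_pullback_def)
  have EB: "(\<exists>\<beta><Q B. M T0 B \<beta> = \<delta>) \<longleftrightarrow> fiber I f s (M {} T0 \<delta>) \<noteq> {}" if "\<delta> < Q T0" for \<delta>
    unfolding B_def by (rule ext_ne[OF T0 s ns that])
  have EC: "(\<exists>\<gamma><Q C. M T0 C \<gamma> = \<delta>) \<longleftrightarrow> fiber I f s' (M {} T0 \<delta>) \<noteq> {}" if "\<delta> < Q T0" for \<delta>
    unfolding C_def by (rule ext_ne[OF T0 s' ns' that])
  have BC1: "card (fiber I f s (M {} T0 \<delta>)) = 1 \<or> card (fiber I f s' (M {} T0 \<delta>)) = 1" if "\<delta> < Q T0" for \<delta>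
    using comp_bc1[OF comp Mfst[OF T0 that] s s' ne] .
  have fstB: "M {} B \<beta> = M {} T0 (M T0 B \<beta>)" if "\<beta> < Q B" for \<beta>
    using ext_cmp(1)[OF T0 s] that unfolding B_def by blast
  have fstC: "M {} C \<gamma> = M {} T0 (M T0 C \<gamma>)" if "\<gamma> < Q C" for \<gamma>
    using ext_cmp(1)[OF T0 s'] that unfolding C_def by blast
  have "is_pushout (Q A) (Q B) (Q C) (Q T0) (M B A) (M C A) (M T0 B) (M T0 C)"
  proof (rule pushout_intro[OF sq])
    show "\<And>\<beta> \<gamma>. \<beta> < Q B \<Longrightarrow> \<gamma> < Q C \<Longrightarrow> M T0 B \<beta> = M T0 C \<gamma> \<Longrightarrow> \<exists>\<alpha><Q A. M B A \<alpha> = \<beta> \<and> M C A \<alpha> = \<gamma>"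
      by (rule pb_ex[OF pb])
    fix \<delta> assume dl: "\<delta> < Q T0"
    show "(\<exists>\<beta><Q B. M T0 B \<beta> = \<delta>) \<or> (\<exists>\<gamma><Q C. M T0 C \<gamma> = \<delta>)"
      using BC1[OF dl] EB[OF dl] EC[OF dl] card1_ne by blast
  next
    fix \<delta> \<beta> \<beta>' assume dl: "\<delta> < Q T0" and nc: "\<not> (\<exists>\<gamma><Q C. M T0 C \<gamma> = \<delta>)"
      and b: "\<beta> < Q B" "\<beta>' < Q B" "M T0 B \<beta> = \<delta>" "M T0 B \<beta>' = \<delta>"
    have "card (fiber I f s (M {} T0 \<delta>)) = 1" using BC1[OF dl] EC[OF dl] nc by auto
    then show "\<beta> = \<beta>'" using ext_uniq[OF T0 s ns dl] b unfolding B_def by simp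
  next
    fix \<delta> \<gamma> \<gamma>' assume dl: "\<delta> < Q T0" and nb: "\<not> (\<exists>\<beta><Q B. M T0 B \<beta> = \<delta>)"
      and c: "\<gamma> < Q C" "\<gamma>' < Q C" "M T0 C \<gamma> = \<delta>" "M T0 C \<gamma>' = \<delta>"
    have "card (fiber I f s' (M {} T0 \<delta>)) = 1" using BC1[OF dl] EB[OF dl] nb by auto
    then show "\<gamma> = \<gamma>'" using ext_uniq[OF T0 s' ns' dl] c unfolding C_def by simp
  next
    fix \<delta> \<delta>' assume lt: "\<delta> < \<delta>'" and dl': "\<delta>' < Q T0"
    have dl: "\<delta> < Q T0" using lt dl' by simp
    define i where "i = M {} T0 \<delta>"
    define i' where "i' = M {} T0 \<delta>'"
    have ii: "i \<le> i'" unfolding i_def i'_def using Mmono[of "{}" T0 \<delta> \<delta>'] T0 lt dl' by simp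
    have i'N: "i' < N" unfolding i'_def using Mfst[OF T0 dl'] .
    show "(\<exists>\<beta><Q B. \<exists>\<beta>'<Q B. M T0 B \<beta> = \<delta> \<and> M T0 B \<beta>' = \<delta>' \<and> \<beta> \<le> \<beta>') \<or>
        (\<exists>\<gamma><Q C. \<exists>\<gamma>'<Q C. M T0 C \<gamma> = \<delta> \<and> M T0 C \<gamma>' = \<delta>' \<and> \<gamma> \<le> \<gamma>') \<or>
        (\<exists>\<beta><Q B. \<exists>\<alpha><Q A. \<exists>\<gamma>'<Q C. M T0 B \<beta> = \<delta> \<and> M T0 C \<gamma>' = \<delta>' \<and> \<beta> \<le> M B A \<alpha> \<and> M C A \<alpha> \<le> \<gamma>') \<or>
        (\<exists>\<gamma><Q C. \<exists>\<alpha><Q A. \<exists>\<beta>'<Q B. M T0 C \<gamma> = \<delta> \<and> M T0 B \<beta>' = \<delta>' \<and> \<gamma> \<le> M C A \<alpha> \<and> M B A \<alpha> \<le> \<beta>')"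
      (is "?M1 \<or> ?M2 \<or> ?M3 \<or> ?M4")
    proof (cases "i = i'")
      case True
      from BC1[OF dl] show ?thesis
      proof
        assume c1: "card (fiber I f s (M {} T0 \<delta>)) = 1"
        obtain \<beta> where b: "\<beta> < Q B" "M T0 B \<beta> = \<delta>" using EB[OF dl] card1_ne[OF c1] by blast
        obtain \<beta>' where b': "\<beta>' < Q B" "M T0 B \<beta>' = \<delta>'" using EB[OF dl'] card1_ne[OF c1] True
          unfolding i_def i'_def by auto
        have "\<beta> \<le> \<beta>'" using ext_same[OF T0 s ns less_imp_le[OF lt] dl'] True c1 b b'
          unfolding i_def i'_def B_def by simp
        then have ?M1 using b b' by blast
        then show ?thesis by blast
      next
        assume c1: "card (fiber I f s' (M {} T0 \<delta>)) = 1"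
        obtain \<gamma> where b: "\<gamma> < Q C" "M T0 C \<gamma> = \<delta>" using EC[OF dl] card1_ne[OF c1] by blast
        obtain \<gamma>' where b': "\<gamma>' < Q C" "M T0 C \<gamma>' = \<delta>'" using EC[OF dl'] card1_ne[OF c1] True
          unfolding i_def i'_def by auto
        have "\<gamma> \<le> \<gamma>'" using ext_same[OF T0 s' ns' less_imp_le[OF lt] dl'] True c1 b b'
          unfolding i_def i'_def C_def by simp
        then have ?M2 using b b' by blast
        then show ?thesis by blast
      qed
    next
      case False
      then have lti: "i < i'" using ii by simp
      show ?thesis
      proof (cases "(\<exists>\<beta><Q B. M T0 B \<beta> = \<delta>) \<and> (\<exists>\<beta><Q B. M T0 B \<beta> = \<delta>')")
        case True
        then obtain \<beta> \<beta>' where b: "\<beta> < Q B" "M T0 B \<beta> = \<delta>" "\<beta>' < Q B" "M T0 B \<beta>' = \<delta>'" by blast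
        have "\<beta> \<le> \<beta>'" using ext_lt[OF T0 s, of \<beta> \<beta>'] b fstB[OF b(1)] fstB[OF b(3)] lti
          unfolding i_def i'_def B_def by simp
        then have ?M1 using b by blast
        then show ?thesis by blast
      next
        case nB: False
        show ?thesis
        proof (cases "(\<exists>\<gamma><Q C. M T0 C \<gamma> = \<delta>) \<and> (\<exists>\<gamma><Q C. M T0 C \<gamma> = \<delta>')")
          case True
          then obtain \<gamma> \<gamma>' where b: "\<gamma> < Q C" "M T0 C \<gamma> = \<delta>" "\<gamma>' < Q C" "M T0 C \<gamma>' = \<delta>'" by blast
          have "\<gamma> \<le> \<gamma>'" using ext_lt[OF T0 s', of \<gamma> \<gamma>'] b fstC[OF b(1)] fstC[OF b(3)] lti
            unfolding i_def i'_def C_def by simp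
          then have ?M2 using b by blast
          then show ?thesis by blast
        next
          case nC: False
          have K: "(\<exists>\<beta><Q B. M T0 B \<beta> = d) \<or> (\<exists>\<gamma><Q C. M T0 C \<gamma> = d)" if "d < Q T0" for d
            using BC1[OF that] EB[OF that] EC[OF that] card1_ne by blast
          have bridgeA: "\<exists>\<alpha><Q A. M {} A \<alpha> = m" if "m < N" "\<forall>t\<in>A. fiber I f t m \<noteq> {}" for m
          proof -
            have "\<And>t. t \<in> A \<Longrightarrow> (SOME y. y \<in> fiber I f t m) \<in> fiber I f t m"
              using that(2) by (simp add: some_in_eq)
            from csurj[OF sub(1) that(1) this] show ?thesis by blast
          qed
          have pB: "M {} B (M B A \<alpha>) = M {} A \<alpha>" "M B A \<alpha> < Q B" if "\<alpha> < Q A" for \<alpha>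
            using Mcomp[OF sub(4) sub(2) sub(1) that] Mlt[OF sub(2) sub(1) that] by auto
          have pC: "M {} C (M C A \<alpha>) = M {} A \<alpha>" "M C A \<alpha> < Q C" if "\<alpha> < Q A" for \<alpha>
            using Mcomp[OF sub(5) sub(3) sub(1) that] Mlt[OF sub(3) sub(1) that] by auto
          from K[OF dl] K[OF dl'] nB nC
          have "((\<exists>\<beta><Q B. M T0 B \<beta> = \<delta>) \<and> \<not> (\<exists>\<gamma><Q C. M T0 C \<gamma> = \<delta>) \<and>
                 \<not> (\<exists>\<beta><Q B. M T0 B \<beta> = \<delta>') \<and> (\<exists>\<gamma><Q C. M T0 C \<gamma> = \<delta>')) \<or>
                ((\<exists>\<gamma><Q C. M T0 C \<gamma> = \<delta>) \<and> \<not> (\<exists>\<beta><Q B. M T0 B \<beta> = \<delta>) \<and>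
                 \<not> (\<exists>\<gamma><Q C. M T0 C \<gamma> = \<delta>') \<and> (\<exists>\<beta><Q B. M T0 B \<beta> = \<delta>'))"
            by blast
          then show ?thesis
          proof
            assume H: "(\<exists>\<beta><Q B. M T0 B \<beta> = \<delta>) \<and> \<not> (\<exists>\<gamma><Q C. M T0 C \<gamma> = \<delta>) \<and>
                 \<not> (\<exists>\<beta><Q B. M T0 B \<beta> = \<delta>') \<and> (\<exists>\<gamma><Q C. M T0 C \<gamma> = \<delta>')"
            then obtain \<beta> \<gamma>' where b: "\<beta> < Q B" "M T0 B \<beta> = \<delta>" "\<gamma>' < Q C" "M T0 C \<gamma>' = \<delta>'" by blast
            have m1: "fiber I f s' i = {}" using H EC[OF dl] unfolding i_def by blast
            have m2: "fiber I f s i' = {}" using H EB[OF dl'] unfolding i'_def by blast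
            obtain m where m: "i < m" "m < i'" "\<forall>t\<in>A. fiber I f t m \<noteq> {}"
              using bridge[OF comp sub(1) sub(8) sub(9) ne lti i'N m1 m2] by blast
            obtain \<alpha> where al: "\<alpha> < Q A" "M {} A \<alpha> = m" using bridgeA[of m] m i'N by auto
            have "\<beta> \<le> M B A \<alpha>" using ext_lt[OF T0 s, of \<beta> "M B A \<alpha>"] b pB[OF al(1)] fstB[OF b(1)] al m
              unfolding i_def B_def by simp
            moreover have "M C A \<alpha> \<le> \<gamma>'" using ext_lt[OF T0 s', of "M C A \<alpha>" \<gamma>'] b pC[OF al(1)] fstC[OF b(3)] al m
              unfolding i'_def C_def by simp
            ultimately have ?M3 using b al by blast
            then show ?thesis by blast
          next
            assume H: "(\<exists>\<gamma><Q C. M T0 C \<gamma> = \<delta>) \<and> \<not> (\<exists>\<beta><Q B. M T0 B \<beta> = \<delta>) \<and>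
                 \<not> (\<exists>\<gamma><Q C. M T0 C \<gamma> = \<delta>') \<and> (\<exists>\<beta><Q B. M T0 B \<beta> = \<delta>')"
            then obtain \<gamma> \<beta>' where b: "\<gamma> < Q C" "M T0 C \<gamma> = \<delta>" "\<beta>' < Q B" "M T0 B \<beta>' = \<delta>'" by blast
            have m1: "fiber I f s i = {}" using H EB[OF dl] unfolding i_def by blast
            have m2: "fiber I f s' i' = {}" using H EC[OF dl'] unfolding i'_def by blast
            obtain m where m: "i < m" "m < i'" "\<forall>t\<in>A. fiber I f t m \<noteq> {}"
              using bridge[OF comp sub(1) sub(9) sub(8) ne[symmetric] lti i'N m1 m2] by blast
            obtain \<alpha> where al: "\<alpha> < Q A" "M {} A \<alpha> = m" using bridgeA[of m] m i'N by auto
            have "\<gamma> \<le> M C A \<alpha>" using ext_lt[OF T0 s', of \<gamma> "M C A \<alpha>"] b pC[OF al(1)] fstC[OF b(1)] al m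
              unfolding i_def C_def by simp
            moreover have "M B A \<alpha> \<le> \<beta>'" using ext_lt[OF T0 s, of "M B A \<alpha>" \<beta>'] b pB[OF al(1)] fstB[OF b(3)] al m
              unfolding i'_def B_def by simp
            ultimately have ?M4 using b al by blast
            then show ?thesis by blast
          qed
        qed
      qed
    qed
  qed
  then show "is_pushout (Q (T0 \<union> {s, s'})) (Q (T0 \<union> {s})) (Q (T0 \<union> {s'})) (Q T0)
          (M (T0 \<union> {s}) (T0 \<union> {s, s'})) (M (T0 \<union> {s'}) (T0 \<union> {s, s'}))
          (M T0 (T0 \<union> {s})) (M T0 (T0 \<union> {s'}))" unfolding A_def B_def C_def .
qed

end


context ccube
begin

lemma po0:
  assumes co: "strongly_cocartesian S Q M" and s: "s \<in> S" "s' \<in> S" "s \<noteq> s'"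
  shows "is_pushout (Q {s, s'}) (Q {s}) (Q {s'}) (Q {})
          (M {s} {s, s'}) (M {s'} {s, s'}) (M {} {s}) (M {} {s'})"
proof -
  have "is_pushout (Q ({} \<union> {s, s'})) (Q ({} \<union> {s})) (Q ({} \<union> {s'})) (Q {})
          (M ({} \<union> {s}) ({} \<union> {s, s'})) (M ({} \<union> {s'}) ({} \<union> {s, s'}))
          (M {} ({} \<union> {s})) (M {} ({} \<union> {s'}))"
    using co s unfolding strongly_cocartesian_def by blast
  then show ?thesis by simp
qed

lemma coc_comp:
  assumes co: "strongly_cocartesian S Q M"
  shows "compatible S I N f"
proof -
  have H1: False if s: "s \<in> S" "s' \<in> S" "s \<noteq> s'" and i: "i < N" and e: "fiber I f s i = {}"
    and c: "card (fiber I f s' i) \<noteq> 1" for s s' i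
  proof -
    note po = po0[OF co s]
    have nb: "\<not> (\<exists>\<beta><Q {s}. M {} {s} \<beta> = i)" using single_ex[OF s(1)] e by blast
    have dl: "i < Q {}" using i Q0 by simp
    show False
    proof (cases "fiber I f s' i = {}")
      case True
      have nc: "\<not> (\<exists>\<gamma><Q {s'}. M {} {s'} \<gamma> = i)" using single_ex[OF s(2)] True by blast
      show False by (rule PF1[OF po dl nb nc])
    next
      case False
      then have "card (fiber I f s' i) \<noteq> 0" using fiber_finite[of I f s' i] by simp
      then have "1 < card (fiber I f s' i)" using c by simp
      then obtain g1 g2 where g: "g1 \<in> fiber I f s' i" "g2 \<in> fiber I f s' i" "g1 < g2"
        using two_elems[OF fiber_finite[of I f s' i]] by blast
      have gg: "g1 < I s'" "g2 < I s'" "f s' g1 = i" "f s' g2 = i" using g unfolding fiber_def by auto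
      have "g2 < Q {s'}" "M {} {s'} g1 = i" "M {} {s'} g2 = i" using gg Qs[OF s(2)] Ms[OF s(2)] by auto
      then show False by (rule PF2[OF po nb g(3)])
    qed
  qed
  have H2: False if s: "s \<in> S" "s' \<in> S" "s \<noteq> s'" and dN: "Suc d < N"
    and e1: "fiber I f s d = {}" and e2: "fiber I f s' (Suc d) = {}"
    and n1: "fiber I f s' d \<noteq> {}" and n2: "fiber I f s (Suc d) \<noteq> {}" for s s' d
  proof -
    note po = po0[OF co s]
    have nb: "\<not> (\<exists>\<beta><Q {s}. M {} {s} \<beta> = d)" using single_ex[OF s(1)] e1 by blast
    have nc: "\<not> (\<exists>\<gamma><Q {s'}. M {} {s'} \<gamma> = Suc d)" using single_ex[OF s(2)] e2 by blast
    obtain g where g: "g < Q {s'}" "M {} {s'} g = d" using single_ex[OF s(2)] n1 by blast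
    obtain b where b: "b < Q {s}" "M {} {s} b = Suc d" using single_ex[OF s(1)] n2 by blast
    have "Suc d < Q {}" using dN Q0 by simp
    then show False by (rule PF3[OF po _ nb nc g b])
  qed
  have BC1: "\<forall>i<N. \<forall>s\<in>S. \<forall>s'\<in>S. card (fiber I f s i) \<noteq> 1 \<longrightarrow> card (fiber I f s' i) \<noteq> 1 \<longrightarrow> s = s'"
  proof (intro allI impI ballI)
    fix i s s' assume i: "i < N" and s: "s \<in> S" "s' \<in> S" and c: "card (fiber I f s i) \<noteq> 1" "card (fiber I f s' i) \<noteq> 1"
    show "s = s'"
    proof (rule ccontr)
      assume ne: "s \<noteq> s'"
      have "\<not> (1 < card (fiber I f s i) \<and> 1 < card (fiber I f s' i))"
        using bc[unfolded backwards_compatible_def, rule_format, OF i s] ne by blast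
      then have "card (fiber I f s i) = 0 \<or> card (fiber I f s' i) = 0" using c by linarith
      then have "fiber I f s i = {} \<or> fiber I f s' i = {}" using fiber_finite[of I f s i] fiber_finite[of I f s' i] by simp
      then show False
      proof
        assume "fiber I f s i = {}" then show False using H1[OF s ne i _ c(2)] by simp
      next
        assume "fiber I f s' i = {}" then show False using H1[OF s(2) s(1) ne[symmetric] i _ c(1)] by simp
      qed
    qed
  qed
  have BC2: "\<forall>i. 0 < i \<longrightarrow> i < N \<longrightarrow> (\<forall>s\<in>S. \<forall>s'\<in>S.
        \<not> {i - 1, i} \<subseteq> f s ` {..<I s} \<longrightarrow> \<not> {i - 1, i} \<subseteq> f s' ` {..<I s'} \<longrightarrow> s = s')"
  proof (intro allI impI ballI)
    fix i s s' assume i: "0 < i" "i < N" and s: "s \<in> S" "s' \<in> S"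
      and c: "\<not> {i - 1, i} \<subseteq> f s ` {..<I s}" "\<not> {i - 1, i} \<subseteq> f s' ` {..<I s'}"
    show "s = s'"
    proof (rule ccontr)
      assume ne: "s \<noteq> s'"
      have img: "{j - 1, j} \<subseteq> f t ` {..<I t} \<longleftrightarrow> fiber I f t (j - 1) \<noteq> {} \<and> fiber I f t j \<noteq> {}" for t j
        by (simp add: fiber_ne)
      have c': "fiber I f s (i - 1) = {} \<or> fiber I f s i = {}" "fiber I f s' (i - 1) = {} \<or> fiber I f s' i = {}"
        using c unfolding img by auto
      have iN: "i - 1 < N" using i by simp
      have Si: "Suc (i - 1) = i" using i by simp
      have bc1: "card (fiber I f s m) = 1 \<or> card (fiber I f s' m) = 1" if "m < N" for m
      proof (rule ccontr)
        assume "\<not> (card (fiber I f s m) = 1 \<or> card (fiber I f s' m) = 1)"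
        then show False using BC1[rule_format, OF that s] ne by blast
      qed
      show False
      proof (cases "fiber I f s (i - 1) = {}")
        case A: True
        show False
        proof (cases "fiber I f s' (i - 1) = {}")
          case True then show False using bc1[OF iN] A by simp
        next
          case False
          then have B: "fiber I f s' i = {}" using c'(2) by simp
          have "card (fiber I f s i) = 1" using bc1[OF i(2)] B by auto
          then have "fiber I f s i \<noteq> {}" by (rule card1_ne)
          then show False using H2[OF s ne, of "i - 1"] A B False Si i by simp
        qed
      next
        case A: False
        then have A': "fiber I f s i = {}" using c'(1) by simp
        show False
        proof (cases "fiber I f s' i = {}")
          case True then show False using bc1[OF i(2)] A' by simp
        next
          case False
          then have B: "fiber I f s' (i - 1) = {}" using c'(2) by simp
          have "fiber I f s (i - 1) \<noteq> {}" using A .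
          then show False using H2[OF s(2) s(1) ne[symmetric], of "i - 1"] A' B False Si i by simp
        qed
      qed
    qed
  qed
  show ?thesis unfolding compatible_def using BC1 BC2 by (rule conjI)
qed

end


definition linord_on :: "'b set \<Rightarrow> ('b \<Rightarrow> 'b \<Rightarrow> bool) \<Rightarrow> bool" where
  "linord_on X le \<longleftrightarrow> (\<forall>x\<in>X. le x x) \<and> (\<forall>x\<in>X. \<forall>y\<in>X. le x y \<longrightarrow> le y x \<longrightarrow> x = y) \<and>
     (\<forall>x\<in>X. \<forall>y\<in>X. \<forall>z\<in>X. le x y \<longrightarrow> le y z \<longrightarrow> le x z) \<and> (\<forall>x\<in>X. \<forall>y\<in>X. le x y \<or> le y x)"

definition rnk :: "'b set \<Rightarrow> ('b \<Rightarrow> 'b \<Rightarrow> bool) \<Rightarrow> 'b \<Rightarrow> nat" where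
  "rnk X le x = card {q\<in>X. le q x \<and> q \<noteq> x}"

lemma rnk_lt:
  assumes fin: "finite X" and lo: "linord_on X le" and xy: "x \<in> X" "y \<in> X" "le x y" "x \<noteq> y"
  shows "rnk X le x < rnk X le y"
  unfolding rnk_def
proof (rule psubset_card_mono)
  show "finite {q \<in> X. le q y \<and> q \<noteq> y}" using fin by simp
  have tr: "\<And>q. q \<in> X \<Longrightarrow> le q x \<Longrightarrow> le q y" using lo xy unfolding linord_on_def by blast
  have an: "\<not> le y x" using lo xy unfolding linord_on_def by blast
  show "{q \<in> X. le q x \<and> q \<noteq> x} \<subset> {q \<in> X. le q y \<and> q \<noteq> y}"
  proof
    show "{q \<in> X. le q x \<and> q \<noteq> x} \<subseteq> {q \<in> X. le q y \<and> q \<noteq> y}" using tr an by blast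
    have "x \<in> {q \<in> X. le q y \<and> q \<noteq> y}" using xy by simp
    then show "{q \<in> X. le q x \<and> q \<noteq> x} \<noteq> {q \<in> X. le q y \<and> q \<noteq> y}" by blast
  qed
qed

lemma rnk_le_iff:
  assumes fin: "finite X" and lo: "linord_on X le" and xy: "x \<in> X" "y \<in> X"
  shows "le x y \<longleftrightarrow> rnk X le x \<le> rnk X le y"
proof
  assume "le x y"
  then show "rnk X le x \<le> rnk X le y" using rnk_lt[OF fin lo xy] by (cases "x = y") auto
next
  assume r: "rnk X le x \<le> rnk X le y"
  show "le x y"
  proof (rule ccontr)
    assume n: "\<not> le x y"
    then have "le y x" "y \<noteq> x" using lo xy unfolding linord_on_def by blast+
    then show False using rnk_lt[OF fin lo xy(2) xy(1)] r by simp
  qed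
qed

lemma rnk_inj:
  assumes fin: "finite X" and lo: "linord_on X le" and xy: "x \<in> X" "y \<in> X" and e: "rnk X le x = rnk X le y"
  shows "x = y"
proof -
  have "le x y" "le y x" using rnk_le_iff[OF fin lo xy] rnk_le_iff[OF fin lo xy(2,1)] e by simp_all
  then show ?thesis using lo xy unfolding linord_on_def by blast
qed

lemma rnk_range:
  assumes fin: "finite X" and x: "x \<in> X"
  shows "rnk X le x < card X"
  unfolding rnk_def
proof (rule psubset_card_mono[OF fin])
  show "{q \<in> X. le q x \<and> q \<noteq> x} \<subset> X" using x by blast
qed

lemma rnk_bij:
  assumes fin: "finite X" and lo: "linord_on X le"
  shows "bij_betw (rnk X le) X {..<card X}"
  unfolding bij_betw_def
proof
  show inj: "inj_on (rnk X le) X" using rnk_inj[OF fin lo] by (meson inj_onI)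
  have sub: "rnk X le ` X \<subseteq> {..<card X}" using rnk_range[OF fin] by blast
  have "card (rnk X le ` X) = card {..<card X}" using card_image[OF inj] by simp
  then show "rnk X le ` X = {..<card X}" using card_subset_eq[OF _ sub] by simp
qed

lemma rnk_iso:
  assumes fin: "finite X" and lo: "linord_on X le" and e: "bij_betw e {..<n} X"
    and o: "\<And>j j'. j < n \<Longrightarrow> j' < n \<Longrightarrow> le (e j) (e j') \<longleftrightarrow> j \<le> j'" and j: "j < n"
  shows "rnk X le (e j) = j"
proof -
  have inj: "inj_on e {..<n}" and im: "e ` {..<n} = X" using e by (auto simp: bij_betw_def)
  have "{q \<in> X. le q (e j) \<and> q \<noteq> e j} = e ` {..<j}"
  proof
    show "{q \<in> X. le q (e j) \<and> q \<noteq> e j} \<subseteq> e ` {..<j}"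
    proof
      fix q assume q: "q \<in> {q \<in> X. le q (e j) \<and> q \<noteq> e j}"
      then obtain j' where j': "j' < n" "q = e j'" using im by auto
      then have "j' \<le> j" "j' \<noteq> j" using q o[OF j'(1) j] by auto
      then show "q \<in> e ` {..<j}" using j' by auto
    qed
    show "e ` {..<j} \<subseteq> {q \<in> X. le q (e j) \<and> q \<noteq> e j}"
    proof
      fix q assume "q \<in> e ` {..<j}"
      then obtain j' where j': "j' < j" "q = e j'" by auto
      have "j' < n" using j' j by simp
      then have "q \<in> X" "le q (e j)" using j' o[of j' j] j im by auto
      moreover have "q \<noteq> e j" using inj j' j \<open>j' < n\<close> unfolding inj_on_def by auto
      ultimately show "q \<in> {q \<in> X. le q (e j) \<and> q \<noteq> e j}" by simp
    qed
  qed
  moreover have "card (e ` {..<j}) = j"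
  proof -
    have "inj_on e {..<j}" using inj_on_subset[OF inj, of "{..<j}"] j by auto
    then show ?thesis by (simp add: card_image)
  qed
  ultimately show ?thesis unfolding rnk_def by simp
qed

definition cQ :: "('a \<Rightarrow> nat) \<Rightarrow> nat \<Rightarrow> ('a \<Rightarrow> nat \<Rightarrow> nat) \<Rightarrow> 'a set \<Rightarrow> nat" where
  "cQ I N f T = card (cech_obj I N f T)"
definition crk :: "('a \<Rightarrow> nat) \<Rightarrow> nat \<Rightarrow> ('a \<Rightarrow> nat \<Rightarrow> nat) \<Rightarrow> 'a set \<Rightarrow> nat \<times> ('a \<Rightarrow> nat) \<Rightarrow> nat" where
  "crk I N f T = rnk (cech_obj I N f T) (cech_le T)"
definition cun :: "('a \<Rightarrow> nat) \<Rightarrow> nat \<Rightarrow> ('a \<Rightarrow> nat \<Rightarrow> nat) \<Rightarrow> 'a set \<Rightarrow> nat \<Rightarrow> nat \<times> ('a \<Rightarrow> nat)" where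
  "cun I N f T k = inv_into (cech_obj I N f T) (crk I N f T) k"
definition cproj :: "'a set \<Rightarrow> nat \<times> ('a \<Rightarrow> nat) \<Rightarrow> nat \<times> ('a \<Rightarrow> nat)" where
  "cproj T p = (fst p, restrict (snd p) T)"
definition cM :: "('a \<Rightarrow> nat) \<Rightarrow> nat \<Rightarrow> ('a \<Rightarrow> nat \<Rightarrow> nat) \<Rightarrow> 'a set \<Rightarrow> 'a set \<Rightarrow> nat \<Rightarrow> nat" where
  "cM I N f T T' k = crk I N f T (cproj T (cun I N f T' k))"

lemma obj_iff: "p \<in> cech_obj I N f T \<longleftrightarrow> fst p < N \<and> snd p \<in> (\<Pi>\<^sub>E t\<in>T. fiber I f t (fst p))"
  by (cases p) (simp add: cech_obj_def)

locale bcclaw =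
  fixes S :: "'a set" and I :: "'a \<Rightarrow> nat" and N :: nat and f :: "'a \<Rightarrow> nat \<Rightarrow> nat"
  assumes finS: "finite S" and dm: "\<forall>s\<in>S. dmor (I s) N (f s)" and bcc: "backwards_compatible S I N f"
begin

abbreviation "obj \<equiv> cech_obj I N f"

lemma fin: "T \<subseteq> S \<Longrightarrow> finite (obj T)"
proof -
  assume TS: "T \<subseteq> S"
  have finT: "finite T" using TS finS finite_subset by blast
  have "obj T \<subseteq> {..<N} \<times> (\<Pi>\<^sub>E t\<in>T. {..<I t})"
  proof
    fix p assume "p \<in> obj T"
    then have "fst p < N" "snd p \<in> (\<Pi>\<^sub>E t\<in>T. fiber I f t (fst p))" unfolding obj_iff by auto
    moreover have "(\<Pi>\<^sub>E t\<in>T. fiber I f t (fst p)) \<subseteq> (\<Pi>\<^sub>E t\<in>T. {..<I t})"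
      by (rule PiE_mono) (auto simp: fiber_def)
    ultimately show "p \<in> {..<N} \<times> (\<Pi>\<^sub>E t\<in>T. {..<I t})" by (cases p) auto
  qed
  moreover have "finite ({..<N} \<times> (\<Pi>\<^sub>E t\<in>T. {..<I t}))"
    using finT by (intro finite_cartesian_product finite_PiE) auto
  ultimately show ?thesis by (rule finite_subset)
qed

lemma lin: "T \<subseteq> S \<Longrightarrow> linord_on (obj T) (cech_le T)"
proof -
  assume TS: "T \<subseteq> S"
  have antis: "p = q" if "p \<in> obj T" "q \<in> obj T" "cech_le T p q" "cech_le T q p" for p q
  proof -
    have e1: "fst p = fst q" using that(3,4) unfolding cech_le_def by auto
    have e2: "snd p t = snd q t" if "t \<in> T" for t
      using \<open>cech_le T p q\<close> \<open>cech_le T q p\<close> e1 that unfolding cech_le_def by (auto intro: antisym)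
    have "snd p \<in> (\<Pi>\<^sub>E t\<in>T. fiber I f t (fst p))" "snd q \<in> (\<Pi>\<^sub>E t\<in>T. fiber I f t (fst p))"
      using that(1,2) e1 unfolding obj_iff by auto
    then have "snd p = snd q" using e2 by (rule PiE_ext)
    then show ?thesis using e1 by (simp add: prod_eq_iff)
  qed
  have trans: "cech_le T p r" if "cech_le T p q" "cech_le T q r" for p q r
    using that unfolding cech_le_def by (auto intro: order_trans)
  have total: "cech_le T p q \<or> cech_le T q p" if "p \<in> obj T" "q \<in> obj T" for p q
  proof (cases "fst p = fst q")
    case False then show ?thesis unfolding cech_le_def by auto
  next
    case True
    define i where "i = fst p"
    have fp: "\<And>t. t \<in> T \<Longrightarrow> snd p t \<in> fiber I f t i" "\<And>t. t \<in> T \<Longrightarrow> snd q t \<in> fiber I f t i"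
      using that True unfolding obj_iff i_def by auto
    have iN: "i < N" using that unfolding obj_iff i_def by auto
    show ?thesis
    proof (cases "\<exists>t0\<in>T. 1 < card (fiber I f t0 i)")
      case True
      then obtain t0 where t0: "t0 \<in> T" "1 < card (fiber I f t0 i)" by blast
      have oth: "snd p t = snd q t" if "t \<in> T" "t \<noteq> t0" for t
      proof -
        have "\<not> 1 < card (fiber I f t i)"
          using bcc[unfolded backwards_compatible_def, rule_format, OF iN, of t t0] that t0 TS by blast
        then have "card (fiber I f t i) \<le> 1" by simp
        then show ?thesis using card_one_eq[OF fiber_finite[of I f t i]] fp that(1) by blast
      qed
      show ?thesis
      proof (cases "snd p t0 \<le> snd q t0")
        case True
        then have "cech_le T p q" unfolding cech_le_def using \<open>fst p = fst q\<close> oth by force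
        then show ?thesis by simp
      next
        case False
        then have "cech_le T q p" unfolding cech_le_def using \<open>fst p = fst q\<close> oth by force
        then show ?thesis by simp
      qed
    next
      case False
      have oth: "snd p t = snd q t" if "t \<in> T" for t
      proof -
        have "\<not> 1 < card (fiber I f t i)" using False that by blast
        then have "card (fiber I f t i) \<le> 1" by simp
        then show ?thesis using card_one_eq[OF fiber_finite[of I f t i]] fp that by blast
      qed
      then have "cech_le T p q" unfolding cech_le_def using \<open>fst p = fst q\<close> by force
      then show ?thesis by simp
    qed
  qed
  have refl: "cech_le T p p" for p unfolding cech_le_def by simp
  show ?thesis unfolding linord_on_def
  proof (intro conjI ballI impI)
    fix x assume "x \<in> obj T" show "cech_le T x x" by (rule refl)
  next
    fix x y assume "x \<in> obj T" "y \<in> obj T" "cech_le T x y" "cech_le T y x"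
    then show "x = y" by (rule antis)
  next
    fix x y z assume "cech_le T x y" "cech_le T y z"
    then show "cech_le T x z" by (rule trans)
  next
    fix x y assume "x \<in> obj T" "y \<in> obj T"
    then show "cech_le T x y \<or> cech_le T y x" by (rule total)
  qed
qed

end


context bcclaw
begin

abbreviation "Qc \<equiv> cQ I N f"
abbreviation "rk \<equiv> crk I N f"
abbreviation "un \<equiv> cun I N f"
abbreviation "Mc \<equiv> cM I N f"

lemma rk_bij: "T \<subseteq> S \<Longrightarrow> bij_betw (rk T) (obj T) {..<Qc T}"
  unfolding crk_def cQ_def by (rule rnk_bij[OF fin lin])

lemma rk_lt: "T \<subseteq> S \<Longrightarrow> p \<in> obj T \<Longrightarrow> rk T p < Qc T"
  unfolding crk_def cQ_def by (rule rnk_range[OF fin])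

lemma rk_le: "T \<subseteq> S \<Longrightarrow> p \<in> obj T \<Longrightarrow> q \<in> obj T \<Longrightarrow> cech_le T p q \<longleftrightarrow> rk T p \<le> rk T q"
  unfolding crk_def by (rule rnk_le_iff[OF fin lin])

lemma rk_inj: "T \<subseteq> S \<Longrightarrow> p \<in> obj T \<Longrightarrow> q \<in> obj T \<Longrightarrow> rk T p = rk T q \<Longrightarrow> p = q"
  unfolding crk_def by (rule rnk_inj[OF fin lin])

lemma un_in: "T \<subseteq> S \<Longrightarrow> k < Qc T \<Longrightarrow> un T k \<in> obj T"
  unfolding cun_def using rk_bij[of T] by (metis bij_betw_def inv_into_into lessThan_iff)

lemma rk_un: "T \<subseteq> S \<Longrightarrow> k < Qc T \<Longrightarrow> rk T (un T k) = k"
  unfolding cun_def using rk_bij[of T] by (metis bij_betw_inv_into_right lessThan_iff)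

lemma un_rk: "T \<subseteq> S \<Longrightarrow> p \<in> obj T \<Longrightarrow> un T (rk T p) = p"
  unfolding cun_def using rk_bij[of T] by (metis bij_betw_inv_into_left)

lemma proj_in: "T \<subseteq> T' \<Longrightarrow> p \<in> obj T' \<Longrightarrow> cproj T p \<in> obj T"
  unfolding obj_iff cproj_def by (auto simp: restrict_PiE_iff)

lemma proj_id: "p \<in> obj T \<Longrightarrow> cproj T p = p"
  unfolding obj_iff cproj_def by (cases p) auto

lemma proj_proj: "T \<subseteq> T' \<Longrightarrow> cproj T (cproj T' p) = cproj T p"
proof -
  assume "T \<subseteq> T'"
  then have "T' \<inter> T = T" by blast
  then show ?thesis unfolding cproj_def by simp
qed

lemma proj_mono: "T \<subseteq> T' \<Longrightarrow> cech_le T' p q \<Longrightarrow> cech_le T (cproj T p) (cproj T q)"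
  unfolding cech_le_def cproj_def by auto

lemma cube_c: "is_cube S Qc Mc"
  unfolding is_cube_def
proof (intro conjI allI impI)
  fix T T' assume TT: "T \<subseteq> T'" "T' \<subseteq> S"
  have TS: "T \<subseteq> S" using TT by simp
  show "dmor (Qc T') (Qc T) (Mc T T')" unfolding dmor_def
  proof (intro conjI allI impI)
    fix k assume "k < Qc T'"
    then show "Mc T T' k < Qc T" unfolding cM_def using rk_lt[OF TS proj_in[OF TT(1) un_in[OF TT(2)]]] by simp
  next
    fix k k' assume kk: "k \<le> k'" "k' < Qc T'"
    have k: "k < Qc T'" using kk by simp
    have "cech_le T' (un T' k) (un T' k')" using rk_le[OF TT(2) un_in[OF TT(2) k] un_in[OF TT(2) kk(2)]]
      rk_un[OF TT(2) k] rk_un[OF TT(2) kk(2)] kk(1) by simp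
    then have "cech_le T (cproj T (un T' k)) (cproj T (un T' k'))" by (rule proj_mono[OF TT(1)])
    then show "Mc T T' k \<le> Mc T T' k'" unfolding cM_def
      using rk_le[OF TS proj_in[OF TT(1) un_in[OF TT(2) k]] proj_in[OF TT(1) un_in[OF TT(2) kk(2)]]] by simp
  qed
next
  fix T assume TS: "T \<subseteq> S"
  show "meq (Qc T) (Mc T T) id" unfolding meq_def cM_def
    using proj_id[OF un_in[OF TS]] rk_un[OF TS] by simp
next
  fix T T' T'' assume TT: "T \<subseteq> T'" "T' \<subseteq> T''" "T'' \<subseteq> S"
  have T'S: "T' \<subseteq> S" using TT by simp
  show "meq (Qc T'') (Mc T T' \<circ> Mc T' T'') (Mc T T'')" unfolding meq_def
  proof (intro allI impI)
    fix k assume k: "k < Qc T''"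
    have "un T' (Mc T' T'' k) = cproj T' (un T'' k)" unfolding cM_def
      by (rule un_rk[OF T'S proj_in[OF TT(2) un_in[OF TT(3) k]]])
    then show "(Mc T T' \<circ> Mc T' T'') k = Mc T T'' k"
      unfolding comp_def by (simp add: cM_def proj_proj[OF TT(1)])
  qed
qed

end


context bcclaw
begin

lemma Mc_dmor: "T \<subseteq> T' \<Longrightarrow> T' \<subseteq> S \<Longrightarrow> dmor (Qc T') (Qc T) (Mc T T')"
  using cube_c unfolding is_cube_def by blast

lemma Mc_comp: "T \<subseteq> T' \<Longrightarrow> T' \<subseteq> T'' \<Longrightarrow> T'' \<subseteq> S \<Longrightarrow> k < Qc T'' \<Longrightarrow> Mc T T' (Mc T' T'' k) = Mc T T'' k"
proof -
  assume a: "T \<subseteq> T'" "T' \<subseteq> T''" "T'' \<subseteq> S" "k < Qc T''"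
  have "\<forall>T T' T''. T \<subseteq> T' \<longrightarrow> T' \<subseteq> T'' \<longrightarrow> T'' \<subseteq> S \<longrightarrow>
        meq (Qc T'') (Mc T T' \<circ> Mc T' T'') (Mc T T'')" using cube_c unfolding is_cube_def by blast
  then have "meq (Qc T'') (Mc T T' \<circ> Mc T' T'') (Mc T T'')" using a by blast
  then show ?thesis using a(4) unfolding meq_def by simp
qed

definition e0 :: "nat \<Rightarrow> nat \<times> ('a \<Rightarrow> nat)" where "e0 j = (j, \<lambda>_. undefined)"

lemma e0_bij: "bij_betw e0 {..<N} (obj {})"
  unfolding bij_betw_def
proof
  show "inj_on e0 {..<N}" unfolding e0_def by (auto intro: inj_onI)
  show "e0 ` {..<N} = obj {}"
  proof
    show "e0 ` {..<N} \<subseteq> obj {}" unfolding e0_def by (auto simp: obj_iff)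
    show "obj {} \<subseteq> e0 ` {..<N}"
    proof
      fix p assume p: "p \<in> obj {}"
      then have "fst p < N" "snd p = (\<lambda>_. undefined)" unfolding obj_iff by auto
      then have "p = e0 (fst p)" "fst p \<in> {..<N}" unfolding e0_def by (auto simp: prod_eq_iff)
      then show "p \<in> e0 ` {..<N}" by blast
    qed
  qed
qed

lemma e0_ord: "cech_le {} (e0 j) (e0 j') \<longleftrightarrow> j \<le> j'"
  unfolding e0_def cech_le_def by auto

lemma Qc0: "Qc {} = N"
  unfolding cQ_def using bij_betw_same_card[OF e0_bij] by simp

lemma rk0: "j < N \<Longrightarrow> rk {} (e0 j) = j"
  unfolding crk_def by (rule rnk_iso[OF fin lin e0_bij]) (auto simp: e0_ord)

definition es :: "'a \<Rightarrow> nat \<Rightarrow> nat \<times> ('a \<Rightarrow> nat)" where "es s j = (f s j, restrict (\<lambda>_. j) {s})"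

lemma es_bij: assumes s: "s \<in> S" shows "bij_betw (es s) {..<I s} (obj {s})"
  unfolding bij_betw_def
proof
  have dms: "dmor (I s) N (f s)" using dm s by blast
  show "inj_on (es s) {..<I s}"
  proof (rule inj_onI)
    fix j j' assume "es s j = es s j'"
    then have "restrict (\<lambda>_. j) {s} s = restrict (\<lambda>_. j') {s} s" unfolding es_def by simp
    then show "j = j'" by simp
  qed
  show "es s ` {..<I s} = obj {s}"
  proof
    show "es s ` {..<I s} \<subseteq> obj {s}"
    proof
      fix p assume "p \<in> es s ` {..<I s}"
      then obtain j where j: "j < I s" "p = es s j" by auto
      have "f s j < N" using dmorD1[OF dms j(1)] .
      moreover have "restrict (\<lambda>_. j) {s} \<in> (\<Pi>\<^sub>E t\<in>{s}. fiber I f t (f s j))"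
        unfolding restrict_PiE_iff fiber_def using j by simp
      ultimately show "p \<in> obj {s}" unfolding j(2) es_def obj_iff by simp
    qed
    show "obj {s} \<subseteq> es s ` {..<I s}"
    proof
      fix p assume p: "p \<in> obj {s}"
      then have p1: "fst p < N" "snd p \<in> (\<Pi>\<^sub>E t\<in>{s}. fiber I f t (fst p))" unfolding obj_iff by auto
      define j where "j = snd p s"
      have jf: "j \<in> fiber I f s (fst p)" using p1(2) unfolding j_def by auto
      then have jj: "j < I s" "f s j = fst p" unfolding fiber_def by auto
      have r: "restrict (\<lambda>_. j) {s} \<in> (\<Pi>\<^sub>E t\<in>{s}. fiber I f t (fst p))"
        unfolding restrict_PiE_iff using jf by simp
      have "snd p = restrict (\<lambda>_. j) {s}" by (rule PiE_ext[OF p1(2) r]) (simp add: j_def)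
      then have "p = es s j" unfolding es_def using jj by (simp add: prod_eq_iff)
      then show "p \<in> es s ` {..<I s}" using jj by blast
    qed
  qed
qed

lemma es_ord: assumes s: "s \<in> S" and j: "j < I s" "j' < I s"
  shows "cech_le {s} (es s j) (es s j') \<longleftrightarrow> j \<le> j'"
proof -
  have dms: "dmor (I s) N (f s)" using dm s by blast
  show ?thesis
  proof
    assume "cech_le {s} (es s j) (es s j')"
    then have "f s j < f s j' \<or> (f s j = f s j' \<and> j \<le> j')" unfolding es_def cech_le_def by simp
    then show "j \<le> j'"
    proof
      assume "f s j < f s j'" then show ?thesis using dmor_rev[OF dms j] by simp
    qed simp
  next
    assume "j \<le> j'"
    then have "f s j \<le> f s j'" using dmorD2[OF dms _ j(2)] by simp
    then show "cech_le {s} (es s j) (es s j')" unfolding es_def cech_le_def using \<open>j \<le> j'\<close> by auto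
  qed
qed

lemma Qcs: "s \<in> S \<Longrightarrow> Qc {s} = I s"
  unfolding cQ_def using bij_betw_same_card[OF es_bij] by simp

lemma un_s: assumes s: "s \<in> S" and j: "j < I s" shows "un {s} j = es s j"
proof -
  have sS: "{s} \<subseteq> S" using s by simp
  have "rk {s} (es s j) = j" unfolding crk_def
    by (rule rnk_iso[OF fin[OF sS] lin[OF sS] es_bij[OF s] _ j]) (rule es_ord[OF s])
  moreover have "es s j \<in> obj {s}" using es_bij[OF s] j by (auto simp: bij_betw_def)
  ultimately show ?thesis using un_rk[OF sS] by metis
qed

lemma Mcs: assumes s: "s \<in> S" and k: "k < I s" shows "Mc {} {s} k = f s k"
proof -
  have dms: "dmor (I s) N (f s)" using dm s by blast
  have r: "restrict (\<lambda>_. k) {s} = (\<lambda>_. undefined) \<or> True" by simp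
  have "cproj {} (es s k) = e0 (f s k)" unfolding cproj_def es_def e0_def by (auto simp: fun_eq_iff)
  then show ?thesis unfolding cM_def using un_s[OF s k] rk0[OF dmorD1[OF dms k]] by simp
qed

lemma cart_c: "strongly_cartesian S Qc Mc"
  unfolding strongly_cartesian_def
proof (intro allI impI)
  fix T0 s s' assume T0: "T0 \<subseteq> S" and s: "s \<in> S" and s': "s' \<in> S" and ne: "s \<noteq> s'"
    and ns: "s \<notin> T0" and ns': "s' \<notin> T0"
  define A where "A = T0 \<union> {s, s'}"
  define B where "B = T0 \<union> {s}"
  define C where "C = T0 \<union> {s'}"
  have sub: "A \<subseteq> S" "B \<subseteq> A" "C \<subseteq> A" "T0 \<subseteq> B" "T0 \<subseteq> C" "B \<subseteq> S" "C \<subseteq> S"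
    using T0 s s' unfolding A_def B_def C_def by auto
  have sq: "is_square (Qc A) (Qc B) (Qc C) (Qc T0) (Mc B A) (Mc C A) (Mc T0 B) (Mc T0 C)"
    unfolding is_square_def
  proof (intro conjI)
    show "dmor (Qc A) (Qc B) (Mc B A)" by (rule Mc_dmor[OF sub(2) sub(1)])
    show "dmor (Qc A) (Qc C) (Mc C A)" by (rule Mc_dmor[OF sub(3) sub(1)])
    show "dmor (Qc B) (Qc T0) (Mc T0 B)" by (rule Mc_dmor[OF sub(4) sub(6)])
    show "dmor (Qc C) (Qc T0) (Mc T0 C)" by (rule Mc_dmor[OF sub(5) sub(7)])
    show "meq (Qc A) (Mc T0 B \<circ> Mc B A) (Mc T0 C \<circ> Mc C A)" unfolding meq_def
      using Mc_comp[OF sub(4) sub(2) sub(1)] Mc_comp[OF sub(5) sub(3) sub(1)] by simp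
  qed
  have "is_pullback (Qc A) (Qc B) (Qc C) (Qc T0) (Mc B A) (Mc C A) (Mc T0 B) (Mc T0 C)"
  proof (rule pullback_intro[OF sq])
    fix y z assume y: "y < Qc B" and z: "z < Qc C" and e: "Mc T0 B y = Mc T0 C z"
    define pb where "pb = un B y"
    define pc where "pc = un C z"
    have pbo: "pb \<in> obj B" unfolding pb_def by (rule un_in[OF sub(6) y])
    have pco: "pc \<in> obj C" unfolding pc_def by (rule un_in[OF sub(7) z])
    have "cproj T0 pb = cproj T0 pc"
      by (rule rk_inj[OF T0 proj_in[OF sub(4) pbo] proj_in[OF sub(5) pco]])
         (use e in \<open>simp add: cM_def pb_def pc_def\<close>)
    then have f0: "fst pb = fst pc" and r0: "restrict (snd pb) T0 = restrict (snd pc) T0"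
      unfolding cproj_def by auto
    have r0': "snd pb t = snd pc t" if "t \<in> T0" for t
    proof -
      have "restrict (snd pb) T0 t = restrict (snd pc) T0 t" using r0 by simp
      then show ?thesis using that by simp
    qed
    define g where "g t = (if t = s' then snd pc t else snd pb t)" for t
    define pa where "pa = (fst pb, restrict g A)"
    have pbo': "fst pb < N" "snd pb \<in> (\<Pi>\<^sub>E t\<in>B. fiber I f t (fst pb))" using pbo unfolding obj_iff by auto
    have pco': "fst pc < N" "snd pc \<in> (\<Pi>\<^sub>E t\<in>C. fiber I f t (fst pc))" using pco unfolding obj_iff by auto
    have "restrict g A \<in> (\<Pi>\<^sub>E t\<in>A. fiber I f t (fst pb))" unfolding restrict_PiE_iff
    proof (intro ballI)
      fix t assume t: "t \<in> A"
      show "g t \<in> fiber I f t (fst pb)"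
      proof (cases "t = s'")
        case True then show ?thesis unfolding g_def using pco'(2) f0 unfolding C_def by auto
      next
        case False then have "t \<in> B" using t unfolding A_def B_def by auto
        then show ?thesis unfolding g_def using pbo'(2) False by auto
      qed
    qed
    then have pao: "pa \<in> obj A" unfolding pa_def using pbo'(1) by (simp add: obj_iff)
    have "cproj B pa = pb"
    proof -
      have "B \<inter> A = B" using sub(2) by blast
      have "restrict (restrict g A) B = restrict (snd pb) B"
        using \<open>B \<inter> A = B\<close> ns' ne unfolding B_def g_def by (auto simp: fun_eq_iff)
      also have "\<dots> = snd pb" using pbo'(2) by simp
      finally show ?thesis unfolding cproj_def pa_def by simp
    qed
    moreover have "cproj C pa = pc"
    proof -
      have "C \<inter> A = C" using sub(3) by blast
      have "restrict (restrict g A) C = restrict (snd pc) C"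
        using \<open>C \<inter> A = C\<close> r0' unfolding C_def g_def by (auto simp: fun_eq_iff)
      also have "\<dots> = snd pc" using pco'(2) by simp
      finally show ?thesis unfolding cproj_def pa_def using f0 by simp
    qed
    ultimately have "Mc B A (rk A pa) = y" "Mc C A (rk A pa) = z"
      unfolding cM_def using un_rk[OF sub(1) pao] rk_un[OF sub(6) y] rk_un[OF sub(7) z] pb_def pc_def by simp_all
    moreover have "rk A pa < Qc A" by (rule rk_lt[OF sub(1) pao])
    ultimately show "\<exists>w<Qc A. Mc B A w = y \<and> Mc C A w = z" by blast
  next
    fix w w' assume w: "w < Qc A" "w' < Qc A" and le1: "Mc B A w \<le> Mc B A w'" and le2: "Mc C A w \<le> Mc C A w'"
    define pa where "pa = un A w"
    define pa' where "pa' = un A w'"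
    have pao: "pa \<in> obj A" "pa' \<in> obj A" unfolding pa_def pa'_def using un_in[OF sub(1)] w by auto
    have c1: "cech_le B (cproj B pa) (cproj B pa')"
      using rk_le[OF sub(6) proj_in[OF sub(2) pao(1)] proj_in[OF sub(2) pao(2)]] le1
      unfolding cM_def pa_def pa'_def by simp
    have c2: "cech_le C (cproj C pa) (cproj C pa')"
      using rk_le[OF sub(7) proj_in[OF sub(3) pao(1)] proj_in[OF sub(3) pao(2)]] le2
      unfolding cM_def pa_def pa'_def by simp
    have "cech_le A pa pa'"
    proof -
      have c1': "fst pa < fst pa' \<or> (fst pa = fst pa' \<and> (\<forall>t\<in>B. snd pa t \<le> snd pa' t))"
        using c1 unfolding cech_le_def cproj_def by simp
      have c2': "fst pa < fst pa' \<or> (fst pa = fst pa' \<and> (\<forall>t\<in>C. snd pa t \<le> snd pa' t))"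
        using c2 unfolding cech_le_def cproj_def by simp
      have "A = B \<union> C" unfolding A_def B_def C_def by auto
      then show ?thesis using c1' c2' unfolding cech_le_def by auto
    qed
    then have "rk A pa \<le> rk A pa'" using rk_le[OF sub(1) pao] by simp
    then show "w \<le> w'" using rk_un[OF sub(1)] w unfolding pa_def pa'_def by simp
  qed
  then show "is_pullback (Qc (T0 \<union> {s, s'})) (Qc (T0 \<union> {s})) (Qc (T0 \<union> {s'})) (Qc T0)
          (Mc (T0 \<union> {s}) (T0 \<union> {s, s'})) (Mc (T0 \<union> {s'}) (T0 \<union> {s, s'}))
          (Mc T0 (T0 \<union> {s})) (Mc T0 (T0 \<union> {s'}))" unfolding A_def B_def C_def .
qed

lemma cech_c: "is_cech_cube S I N f Qc Mc"
  unfolding is_cech_cube_def using cube_c cart_c Qc0 Qcs Mcs by (auto simp: meq_def)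

end


theorem proposition4p1p4:
  fixes S :: "'a set" and I :: "'a \<Rightarrow> nat" and N :: nat and f :: "'a \<Rightarrow> nat \<Rightarrow> nat"
  assumes "finite S"
    and "\<forall>s\<in>S. dmor (I s) N (f s)"
  shows "(candidate_covering S I N f \<longleftrightarrow> backwards_compatible S I N f)
    \<and> (backwards_compatible S I N f \<longrightarrow>
         (\<forall>Q M. is_cech_cube S I N f Q M \<longrightarrow> cech_formula S I N f Q M))
    \<and> (compatible S I N f \<longleftrightarrow>
         (\<exists>Q M. is_cech_cube S I N f Q M) \<and>
         (\<forall>Q M. is_cech_cube S I N f Q M \<longrightarrow> strongly_bicartesian S Q M))"
proof -
  note finS = assms(1) and dm = assms(2)
  have cube_bc: "backwards_compatible S I N f" if "is_cech_cube S I N f Q M" for Q M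
    by (rule ccube.bc[OF ccube.intro[OF finS that]])
  have bc_cube: "is_cech_cube S I N f (cQ I N f) (cM I N f)" if "backwards_compatible S I N f"
    by (rule bcclaw.cech_c[OF bcclaw.intro[OF finS dm that]])
  have form: "cech_formula S I N f Q M" if "is_cech_cube S I N f Q M" for Q M
    by (rule ccube.formula[OF ccube.intro[OF finS that]])
  have comp_bc: "backwards_compatible S I N f" if "compatible S I N f"
    using that unfolding compatible_def backwards_compatible_def by fastforce
  have P1: "candidate_covering S I N f \<longleftrightarrow> backwards_compatible S I N f"
    unfolding candidate_covering_def using cube_bc bc_cube by blast
  have P2: "backwards_compatible S I N f \<longrightarrow>
         (\<forall>Q M. is_cech_cube S I N f Q M \<longrightarrow> cech_formula S I N f Q M)"
    using form by blast
  have P3: "compatible S I N f \<longleftrightarrow>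
         (\<exists>Q M. is_cech_cube S I N f Q M) \<and>
         (\<forall>Q M. is_cech_cube S I N f Q M \<longrightarrow> strongly_bicartesian S Q M)"
  proof
    assume c: "compatible S I N f"
    have "\<exists>Q M. is_cech_cube S I N f Q M" using bc_cube[OF comp_bc[OF c]] by blast
    moreover have "strongly_bicartesian S Q M" if cu: "is_cech_cube S I N f Q M" for Q M
    proof -
      have "strongly_cartesian S Q M" using cu unfolding is_cech_cube_def by blast
      moreover have "strongly_cocartesian S Q M" by (rule ccube.cocart[OF ccube.intro[OF finS cu] c])
      ultimately show ?thesis unfolding strongly_bicartesian_def by blast
    qed
    ultimately show "(\<exists>Q M. is_cech_cube S I N f Q M) \<and>
         (\<forall>Q M. is_cech_cube S I N f Q M \<longrightarrow> strongly_bicartesian S Q M)" by blast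
  next
    assume H: "(\<exists>Q M. is_cech_cube S I N f Q M) \<and>
         (\<forall>Q M. is_cech_cube S I N f Q M \<longrightarrow> strongly_bicartesian S Q M)"
    then obtain Q M where cu: "is_cech_cube S I N f Q M" by blast
    then have "strongly_bicartesian S Q M" using H by blast
    then have "strongly_cocartesian S Q M" unfolding strongly_bicartesian_def by blast
    then show "compatible S I N f" by (rule ccube.coc_comp[OF ccube.intro[OF finS cu]])
  qed
  show ?thesis using P1 P2 P3 by blast
qed

end
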